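(* Let $0\le\mu<L\le+\infty$, $N\ge1$, $R\ge 0$, let $H=\{h_{i,k}\}$ define a fixed-step method with $N$ steps, and let $b\in\mathbb{R}^{N+1}$, $C\in\mathbb{S}^{N+2}$. If $d\ge N+2$, then $w^{(d)}_{\mu,L}(R,H,N,b,C)=w^{sdp}_{\mu,L}(R,H,N,b,C)$; that is, the worst-case performance after $N$ iterations of the method $H$, measured by the criterion $b^{\top}f+\mathrm{Tr}(CG)$, over functions in $\mathcal{F}_{\mu,L}(\mathbb{R}^d)$ equals the optimal value of the semidefinite program defining $w^{sdp}_{\mu,L}$.
   Context: Conventions: $1/(+\infty)=0$, $+\infty-\mu=+\infty$. For $\mu\ge0$, $L\in\mathbb{R}_+\cup\{+\infty\}$, $\mu<L$, $\mathcal{F}_{\mu,L}(\mathbb{R}^d)$ is the set of proper closed convex $f:\mathbb{R}^d\to\mathbb{R}\cup\{+\infty\}$ with (i) $\frac1L\|g_1-g_2\|_2\le\|x_1-x_2\|_2$ for all $x_1,x_2$ and all $g_1\in\partial f(x_1)$, $g_2\in\partial f(x_2)$, and (ii) $f-\frac\mu2\|\cdot\|_2^2$ convex. A set $\{(x_i,g_i,f_i)\}_{i\in I}$ is $\mathcal{F}_{\mu,L}$-interpolable if some $f\in\mathcal{F}_{\mu,L}(\mathbb{R}^d)$ has $f(x_i)=f_i$, $g_i\in\partial f(x_i)$ for all $i\in I$. Fixed-step method with $N$ steps: scalars $h_{i,k}$ for $1\le i\le N$, $0\le k\le N-1$, with $h_{i,k}=0$ for $k\ge i$ (a lower-triangular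 $H\in\mathbb{R}^{N\times N}$); starting from $x_0$, iterates are $x_i=x_0-\sum_{k=0}^{i-1}h_{i,k}g_k$, where $g_k$ is the (sub)gradient returned by the first-order oracle at $x_k$. Let $I=\{0,1,\dots,N,*\}$. The quantity $w^{(d)}_{\mu,L}(R,H,N,b,C)$ is the supremum of $b^{\top}(f_0,\dots,f_N)^{\top}+\mathrm{Tr}(CG)$ over all collections $\{(x_i,g_i,f_i)\}_{i\in I}\subset\mathbb{R}^d\times\mathbb{R}^d\times\mathbb{R}$ such that: the collection is $\mathcal{F}_{\mu,L}$-interpolable; $(x_*,g_*,f_* )=(0,0,0)$; $x_i=x_0-\sum_{k=0}^{i-1}h_{i,k}g_k$ for $i=1,\dots,N$; and $\|x_0-x_*\|_2\le R$. Here $G=P^{\top}P\in\mathbb{S}^{N+2}$ with $P=[g_0\ g_1\ \cdots\ g_N\ x_0]\in\mathbb{R}^{d\times(N+2)}$. (Thus $x_*$ is a minimizer with optimal value $0$, and $w^{(d)}$ is the worst case of the criterion over $\mathcal{F}_{\mu,L}(\mathbb{R}^d)$ and starting points within distance $R$ of a minimizer.) Semidefinite program: let $e_1,\dots,e_{N+2}$ be the standard basis of $\mathbb{R}^{N+2}$. For $i=0,\dots,N$ let $h_i=(-h_{i,0},\dots,-h_{i,i-1},0,\dots,0,1)^{\top}\in\mathbb{R}^{N+2}$ (last entry $1$) and $u_i=e_{i+1}$; let $h_*=u_*=0$. For $i,j\in I$ define the symmetric matrix $A_{ij}$ by $2A_{ij}=\frac{L}{L-\mu}\big(u_j(h_i-h_j)^{\top}+(h_i-h_j)u_j^{\top}\big)+\frac{1}{L-\mu}(u_i-u_j)(u_i-u_j)^{\top}+\frac{\mu}{L-\mu}\big(u_i(h_j-h_i)^{\top}+(h_j-h_i)u_i^{\top}\big)+\frac{L\mu}{L-\mu}(h_i-h_j)(h_i-h_j)^{\top}$,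 where for $L=+\infty$ the coefficients are taken as $\frac{L}{L-\mu}=1$, $\frac{1}{L-\mu}=0$, $\frac{\mu}{L-\mu}=0$, $\frac{L\mu}{L-\mu}=\mu$; and $A_R=e_{N+2}e_{N+2}^{\top}$. Then $w^{sdp}_{\mu,L}(R,H,N,b,C)$ is the supremum of $b^{\top}f+\mathrm{Tr}(CG)$ over $G\in\mathbb{S}^{N+2}$, $f=(f_0,\dots,f_N)\in\mathbb{R}^{N+1}$ subject to $f_j-f_i+\mathrm{Tr}(GA_{ij})\le0$ for all $i,j\in I$ (with $f_*:=0$), $\mathrm{Tr}(GA_R)\le R^2$, and $G\succeq0$. *)

theory Defs
  imports "HOL-Analysis.Analysis"
begin

definition epigraph :: "('a::euclidean_space \<Rightarrow> ereal) \<Rightarrow> ('a \<times> real) set" where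
  "epigraph f = {(x, r). f x \<le> ereal r}"

definition subdiff :: "('a::euclidean_space \<Rightarrow> ereal) \<Rightarrow> 'a \<Rightarrow> 'a set" where
  "subdiff f x = {g. f x \<noteq> \<infinity> \<and> (\<forall>y. f x + ereal (inner g (y - x)) \<le> f y)}"

definition inv_L :: "ereal \<Rightarrow> real" where
  "inv_L L = (if L = \<infinity> then 0 else 1 / real_of_ereal L)"

definition FmuL :: "real \<Rightarrow> ereal \<Rightarrow> ('a::euclidean_space \<Rightarrow> ereal) set" where
  "FmuL \<mu> L = {f.
     (\<forall>x. f x \<noteq> -\<infinity>) \<and> (\<exists>x. f x \<noteq> \<infinity>) \<and>
     closed (epigraph f) \<and> convex (epigraph f) \<and>
     (\<forall>x1 x2 g1 g2. g1 \<in> subdiff f x1 \<longrightarrow> g2 \<in> subdiff f x2 \<longrightarrow>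
        inv_L L * norm (g1 - g2) \<le> norm (x1 - x2)) \<and>
     convex (epigraph (\<lambda>x. f x - ereal (\<mu> / 2 * (norm x)\<^sup>2)))}"

definition interpolable :: "real \<Rightarrow> ereal \<Rightarrow> ('a::euclidean_space \<times> 'a \<times> real) set \<Rightarrow> bool" where
  "interpolable \<mu> L S = (\<exists>f \<in> FmuL \<mu> L. \<forall>(x, g, v) \<in> S. f x = ereal v \<and> g \<in> subdiff f x)"

text \<open>Columns of P = [g_0 ... g_N x_0], indexed 0..N+1.\<close>
definition Pcol :: "nat \<Rightarrow> (nat \<Rightarrow> 'a::euclidean_space) \<Rightarrow> (nat \<Rightarrow> 'a) \<Rightarrow> nat \<Rightarrow> 'a" where
  "Pcol N x g p = (if p \<le> N then g p else x 0)"

definition w_d :: "'a::euclidean_space itself \<Rightarrow> real \<Rightarrow> ereal \<Rightarrow> real \<Rightarrow> (nat \<Rightarrow> nat \<Rightarrow> real)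
    \<Rightarrow> nat \<Rightarrow> (nat \<Rightarrow> real) \<Rightarrow> (nat \<Rightarrow> nat \<Rightarrow> real) \<Rightarrow> ereal" where
  "w_d _ \<mu> L R h N b C = Sup { ereal ((\<Sum>i\<le>N. b i * fv i) +
        (\<Sum>p\<le>N+1. \<Sum>q\<le>N+1. C p q * inner (Pcol N x g q) (Pcol N x g p)))
     | (x :: nat \<Rightarrow> 'a) g fv.
       interpolable \<mu> L ({(x i, g i, fv i) | i. i \<le> N} \<union> {(0, 0, 0)}) \<and>
       (\<forall>i\<in>{1..N}. x i = x 0 - (\<Sum>k<i. h i k *\<^sub>R g k)) \<and>
       norm (x 0 - 0) \<le> R }"

text \<open>Index set I = {0..N} \<union> {*}, with * encoded as None. Vectors in R^(N+2) are
  indexed 0..N+1 (e_k of the paper is index k-1).\<close>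
definition Iset :: "nat \<Rightarrow> nat option set" where
  "Iset N = Some ` {..N} \<union> {None}"

definition hvec :: "(nat \<Rightarrow> nat \<Rightarrow> real) \<Rightarrow> nat \<Rightarrow> nat option \<Rightarrow> nat \<Rightarrow> real" where
  "hvec h N i p = (case i of None \<Rightarrow> 0
     | Some i \<Rightarrow> (if p = N + 1 then 1 else if p < i then - h i p else 0))"

definition uvec :: "nat option \<Rightarrow> nat \<Rightarrow> real" where
  "uvec i p = (case i of None \<Rightarrow> 0 | Some i \<Rightarrow> (if p = i then 1 else 0))"

definition coefL :: "real \<Rightarrow> ereal \<Rightarrow> real" where
  "coefL \<mu> L = (if L = \<infinity> then 1 else real_of_ereal L / (real_of_ereal L - \<mu>))"
definition coef1 :: "real \<Rightarrow> ereal \<Rightarrow> real" where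
  "coef1 \<mu> L = (if L = \<infinity> then 0 else 1 / (real_of_ereal L - \<mu>))"
definition coefmu :: "real \<Rightarrow> ereal \<Rightarrow> real" where
  "coefmu \<mu> L = (if L = \<infinity> then 0 else \<mu> / (real_of_ereal L - \<mu>))"
definition coefLmu :: "real \<Rightarrow> ereal \<Rightarrow> real" where
  "coefLmu \<mu> L = (if L = \<infinity> then \<mu> else real_of_ereal L * \<mu> / (real_of_ereal L - \<mu>))"

definition Amat :: "real \<Rightarrow> ereal \<Rightarrow> (nat \<Rightarrow> nat \<Rightarrow> real) \<Rightarrow> nat \<Rightarrow> nat option \<Rightarrow> nat option
    \<Rightarrow> nat \<Rightarrow> nat \<Rightarrow> real" where
  "Amat \<mu> L h N i j p q =
     (let hi = hvec h N i; hj = hvec h N j; ui = uvec i; uj = uvec j in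
      (coefL \<mu> L * (uj p * (hi q - hj q) + (hi p - hj p) * uj q)
       + coef1 \<mu> L * ((ui p - uj p) * (ui q - uj q))
       + coefmu \<mu> L * (ui p * (hj q - hi q) + (hj p - hi p) * ui q)
       + coefLmu \<mu> L * ((hi p - hj p) * (hi q - hj q))) / 2)"

definition AR :: "nat \<Rightarrow> nat \<Rightarrow> nat \<Rightarrow> real" where
  "AR N p q = (if p = N + 1 \<and> q = N + 1 then 1 else 0)"

definition trace_prod :: "nat \<Rightarrow> (nat \<Rightarrow> nat \<Rightarrow> real) \<Rightarrow> (nat \<Rightarrow> nat \<Rightarrow> real) \<Rightarrow> real" where
  "trace_prod N G A = (\<Sum>p\<le>N+1. \<Sum>q\<le>N+1. G p q * A q p)"

definition sym_mat :: "nat \<Rightarrow> (nat \<Rightarrow> nat \<Rightarrow> real) \<Rightarrow> bool" where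
  "sym_mat N G = (\<forall>p\<le>N+1. \<forall>q\<le>N+1. G p q = G q p)"

definition psd_mat :: "nat \<Rightarrow> (nat \<Rightarrow> nat \<Rightarrow> real) \<Rightarrow> bool" where
  "psd_mat N G = (sym_mat N G \<and>
     (\<forall>v :: nat \<Rightarrow> real. 0 \<le> (\<Sum>p\<le>N+1. \<Sum>q\<le>N+1. v p * G p q * v q)))"

definition fopt :: "(nat \<Rightarrow> real) \<Rightarrow> nat option \<Rightarrow> real" where
  "fopt fv i = (case i of None \<Rightarrow> 0 | Some i \<Rightarrow> fv i)"

definition w_sdp :: "real \<Rightarrow> ereal \<Rightarrow> real \<Rightarrow> (nat \<Rightarrow> nat \<Rightarrow> real)
    \<Rightarrow> nat \<Rightarrow> (nat \<Rightarrow> real) \<Rightarrow> (nat \<Rightarrow> nat \<Rightarrow> real) \<Rightarrow> ereal" where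
  "w_sdp \<mu> L R h N b C = Sup { ereal ((\<Sum>i\<le>N. b i * fv i) + trace_prod N C G)
     | G fv.
       (\<forall>i\<in>Iset N. \<forall>j\<in>Iset N.
          fopt fv j - fopt fv i + trace_prod N G (Amat \<mu> L h N i j) \<le> 0) \<and>
       trace_prod N G (AR N) \<le> R\<^sup>2 \<and>
       psd_mat N G }"

end

theory Submission
  imports Defs
begin
lemma eps_lemma:
  fixes A B C :: real
  assumes "\<And>t. 0 < t \<Longrightarrow> t \<le> 1 \<Longrightarrow> A \<le> C + t * B"
  shows "A \<le> C"
proof (rule ccontr)
  assume "\<not> A \<le> C"
  hence d: "A - C > 0" by simp
  define t where "t = min 1 ((A - C) / (\<bar>B\<bar> + 1))"
  have t0: "0 < t" using d unfolding t_def by auto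
  have t1: "t \<le> 1" unfolding t_def by auto
  have "t * B \<le> t * \<bar>B\<bar>" using t0 by (simp add: mult_left_mono)
  also have "\<dots> \<le> (A - C) / (\<bar>B\<bar> + 1) * \<bar>B\<bar>"
    by (rule mult_right_mono) (auto simp: t_def)
  also have "\<dots> < A - C"
  proof -
    have "(A - C) / (\<bar>B\<bar> + 1) * \<bar>B\<bar> = (A - C) * (\<bar>B\<bar> / (\<bar>B\<bar> + 1))" by simp
    also have "\<dots> < (A - C) * 1"
      by (rule mult_strict_left_mono) (use d in auto)
    finally show ?thesis by simp
  qed
  finally show False using assms[OF t0 t1] by simp
qed

lemma epi_conv:
  fixes f :: "'a::euclidean_space \<Rightarrow> ereal"
  assumes "convex (epigraph f)" "f x = ereal a" "f y = ereal b" "0 \<le> t" "t \<le> 1"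
  shows "f ((1 - t) *\<^sub>R x + t *\<^sub>R y) \<le> ereal ((1 - t) * a + t * b)"
proof -
  have "(x, a) \<in> epigraph f" "(y, b) \<in> epigraph f" using assms by (auto simp: epigraph_def)
  from convexD[OF assms(1) this, of "1 - t" t] assms(4,5)
  have "(1 - t) *\<^sub>R (x, a) + t *\<^sub>R (y, b) \<in> epigraph f" by simp
  thus ?thesis by (simp add: epigraph_def)
qed

lemma conv_epi_real:
  fixes F :: "'a::euclidean_space \<Rightarrow> real"
  assumes "\<And>x y t. 0 \<le> t \<Longrightarrow> t \<le> 1 \<Longrightarrow> F ((1 - t) *\<^sub>R x + t *\<^sub>R y) \<le> (1 - t) * F x + t * F y"
  shows "convex (epigraph (\<lambda>x. ereal (F x)))"
proof (rule convexI)
  fix p q :: "'a \<times> real" and u v :: real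
  assume p: "p \<in> epigraph (\<lambda>x. ereal (F x))" and q: "q \<in> epigraph (\<lambda>x. ereal (F x))"
    and uv: "0 \<le> u" "0 \<le> v" "u + v = 1"
  obtain x r where [simp]: "p = (x, r)" by (cases p)
  obtain y s where [simp]: "q = (y, s)" by (cases q)
  have fx: "F x \<le> r" "F y \<le> s" using p q by (auto simp: epigraph_def)
  have u: "u = 1 - v" using uv by simp
  have "F (u *\<^sub>R x + v *\<^sub>R y) \<le> u * F x + v * F y"
    using assms[of v x y] uv u by auto
  also have "\<dots> \<le> u * r + v * s"
    using fx uv by (intro add_mono mult_left_mono) auto
  finally show "u *\<^sub>R p + v *\<^sub>R q \<in> epigraph (\<lambda>x. ereal (F x))"
    by (simp add: epigraph_def)
qed

lemma sub_conv:
  fixes F :: "'a::euclidean_space \<Rightarrow> real"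
  assumes sub: "\<And>x y. F x + inner (s x) (y - x) \<le> F y" and t: "0 \<le> t" "t \<le> 1"
  shows "F ((1 - t) *\<^sub>R x + t *\<^sub>R y) \<le> (1 - t) * F x + t * F y"
proof -
  define w where "w = (1 - t) *\<^sub>R x + t *\<^sub>R y"
  have a: "F w + inner (s w) (x - w) \<le> F x" "F w + inner (s w) (y - w) \<le> F y" using sub by auto
  have "(1 - t) * (F w + inner (s w) (x - w)) + t * (F w + inner (s w) (y - w)) \<le> (1 - t) * F x + t * F y"
    using a t by (intro add_mono mult_left_mono) auto
  moreover have "(1 - t) * inner (s w) (x - w) + t * inner (s w) (y - w) = 0"
  proof -
    have "(1 - t) *\<^sub>R (x - w) + t *\<^sub>R (y - w) = 0" unfolding w_def by (simp add: algebra_simps)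
    hence "inner (s w) ((1 - t) *\<^sub>R (x - w) + t *\<^sub>R (y - w)) = 0" by simp
    thus ?thesis by (simp add: inner_add_right)
  qed
  ultimately show ?thesis unfolding w_def[symmetric] by (simp add: algebra_simps)
qed

lemma normsq_expand:
  fixes x y :: "'a::real_inner"
  shows "(norm (x + y))\<^sup>2 = (norm x)\<^sup>2 + 2 * inner x y + (norm y)\<^sup>2"
    "(norm (x - y))\<^sup>2 = (norm x)\<^sup>2 - 2 * inner x y + (norm y)\<^sup>2"
  by (simp_all add: power2_norm_eq_inner inner_add_left inner_add_right inner_diff_left inner_diff_right inner_commute)

lemma strong_ineq:
  fixes f :: "'a::euclidean_space \<Rightarrow> ereal"
  assumes cv: "convex (epigraph (\<lambda>x. f x - ereal (\<mu> / 2 * (norm x)\<^sup>2)))"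
    and fx: "f x = ereal vx" and fy: "f y = ereal vy" and g: "g \<in> subdiff f y"
  shows "vy + inner g (x - y) + \<mu> / 2 * (norm (x - y))\<^sup>2 \<le> vx"
proof -
  define q where "q z = \<mu> / 2 * (norm z)\<^sup>2" for z :: 'a
  define d where "d = x - y"
  have key: "inner g d + \<mu> / 2 * (norm d)\<^sup>2 \<le> vx - vy + t * (\<mu> / 2 * (norm d)\<^sup>2)"
    if t: "0 < t" "t \<le> 1" for t
  proof -
    define w where "w = (1 - t) *\<^sub>R y + t *\<^sub>R x"
    have "(\<lambda>x. f x - ereal (q x)) w \<le> ereal ((1 - t) * (vy - q y) + t * (vx - q x))"
      using epi_conv[OF cv[folded q_def], of y "vy - q y" x "vx - q x" t] fx fy t
      by (simp add: w_def)
    hence le1: "f w - ereal (q w) \<le> ereal ((1 - t) * (vy - q y) + t * (vx - q x))" by simp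
    have sg: "f y + ereal (inner g (w - y)) \<le> f w" using g unfolding subdiff_def by auto
    then obtain fw where fw: "f w = ereal fw"
      using le1 fy by (cases "f w") auto
    have A: "vy + inner g (w - y) \<le> fw" using sg fy fw by simp
    have B: "fw - q w \<le> (1 - t) * (vy - q y) + t * (vx - q x)" using le1 fw by simp
    have wy: "w - y = t *\<^sub>R d" unfolding w_def d_def by (simp add: algebra_simps)
    have qw: "q w = q y + \<mu> * t * inner y d + \<mu> / 2 * t\<^sup>2 * (norm d)\<^sup>2"
    proof -
      have "w = y + t *\<^sub>R d" using wy by (simp add: algebra_simps)
      thus ?thesis unfolding q_def by (simp add: normsq_expand power_mult_distrib algebra_simps)
    qed
    have qx: "q x = q y + \<mu> * inner y d + \<mu> / 2 * (norm d)\<^sup>2"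
    proof -
      have "x = y + d" unfolding d_def by simp
      thus ?thesis unfolding q_def by (simp add: normsq_expand algebra_simps inner_commute)
    qed
    have "t * (inner g d) \<le> t * (vx - vy) - t * (\<mu> / 2 * (norm d)\<^sup>2) + t * (t * (\<mu> / 2 * (norm d)\<^sup>2))"
      using A B wy qw qx by (simp add: algebra_simps power2_eq_square)
    hence "t * (inner g d + \<mu> / 2 * (norm d)\<^sup>2) \<le> t * (vx - vy + t * (\<mu> / 2 * (norm d)\<^sup>2))"
      by (simp add: algebra_simps)
    thus ?thesis using t by simp
  qed
  have "inner g d + \<mu> / 2 * (norm d)\<^sup>2 \<le> vx - vy"
    by (rule eps_lemma) (rule key)
  thus ?thesis unfolding d_def by simp
qed

lemma min_sub:
  fixes f :: "'a::euclidean_space \<Rightarrow> ereal"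
  assumes cv: "convex (epigraph f)" and fm: "f m = ereal vm"
    and mn: "\<And>z. f m + ereal (c / 2 * (norm (y - m))\<^sup>2) \<le> f z + ereal (c / 2 * (norm (y - z))\<^sup>2)"
  shows "c *\<^sub>R (y - m) \<in> subdiff f m"
proof -
  have "f m + ereal (inner (c *\<^sub>R (y - m)) (u - m)) \<le> f u" for u
  proof (cases "f u")
    case PInf thus ?thesis using fm by simp
  next
    case MInf thus ?thesis using mn[of u] fm by simp
  next
    case (real vu)
    define e where "e = y - m"
    define d where "d = u - m"
    have key: "vm + c * inner e d \<le> vu + t * (c / 2 * (norm d)\<^sup>2)" if t: "0 < t" "t \<le> 1" for t
    proof -
      define w where "w = (1 - t) *\<^sub>R m + t *\<^sub>R u"
      have A: "f w \<le> ereal ((1 - t) * vm + t * vu)" using epi_conv[OF cv fm real, of t] t by (simp add: w_def)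
      have B: "f m + ereal (c / 2 * (norm (y - m))\<^sup>2) \<le> f w + ereal (c / 2 * (norm (y - w))\<^sup>2)" by (rule mn)
      obtain fw where fw: "f w = ereal fw" using A B fm by (cases "f w") auto
      have A': "fw \<le> (1 - t) * vm + t * vu" using A fw by simp
      have B': "vm + c / 2 * (norm e)\<^sup>2 \<le> fw + c / 2 * (norm (y - w))\<^sup>2" using B fw fm by (simp add: e_def)
      have yw: "y - w = e - t *\<^sub>R d" unfolding w_def e_def d_def by (simp add: algebra_simps)
      have eq: "(norm (y - w))\<^sup>2 = (norm e)\<^sup>2 - 2 * t * inner e d + t\<^sup>2 * (norm d)\<^sup>2"
        unfolding yw by (simp add: normsq_expand power_mult_distrib)
      have "c / 2 * (norm (y - w))\<^sup>2 = c / 2 * (norm e)\<^sup>2 - t * (c * inner e d) + t * (t * (c / 2 * (norm d)\<^sup>2))"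
        unfolding eq by (simp add: algebra_simps power2_eq_square)
      with A' B' have "t * vm + t * (c * inner e d) \<le> t * vu + t * (t * (c / 2 * (norm d)\<^sup>2))"
        by (simp add: algebra_simps)
      hence "t * (vm + c * inner e d) \<le> t * (vu + t * (c / 2 * (norm d)\<^sup>2))"
        by (simp add: distrib_left)
      thus ?thesis using t by simp
    qed
    have "vm + c * inner e d \<le> vu" by (rule eps_lemma) (rule key)
    thus ?thesis using fm real by (simp add: e_def d_def)
  qed
  thus ?thesis unfolding subdiff_def using fm by auto
qed

lemma min_exists:
  fixes f :: "'a::euclidean_space \<Rightarrow> ereal"
  assumes cl: "closed (epigraph f)" and fa: "f a = ereal va"
    and aff: "\<And>z. ereal (\<alpha> + inner \<gamma> z) \<le> f z" and c: "c > 0"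
  shows "\<exists>m vm. f m = ereal vm \<and>
     (\<forall>z. f m + ereal (c / 2 * (norm (y - m))\<^sup>2) \<le> f z + ereal (c / 2 * (norm (y - z))\<^sup>2))"
proof -
  define Fa where "Fa = va + c / 2 * (norm (y - a))\<^sup>2"
  define K where "K = epigraph f \<inter> {p. snd p + c / 2 * (norm (y - fst p))\<^sup>2 \<le> Fa}"
  define G where "G = norm \<gamma>"
  define K0 where "K0 = \<bar>Fa - \<alpha> - inner \<gamma> y\<bar>"
  define \<rho> where "\<rho> = 1 + 2 * (K0 + G) / c"
  define lo where "lo = \<alpha> + inner \<gamma> y - G * \<rho>"
  have G0: "G \<ge> 0" "K0 \<ge> 0" unfolding G_def K0_def by auto
  have clK: "closed K" unfolding K_def
    by (intro closed_Int cl closed_Collect_le continuous_intros)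
  have bnd: "norm (z - y) \<le> \<rho> \<and> lo \<le> r \<and> r \<le> Fa" if zr: "(z, r) \<in> K" for z r
  proof -
    have "f z \<le> ereal r" using zr by (auto simp: K_def epigraph_def)
    hence "ereal (\<alpha> + inner \<gamma> z) \<le> ereal r" using aff[of z] by (rule order_trans[rotated])
    hence r1: "\<alpha> + inner \<gamma> z \<le> r" by simp
    have r2: "r + c / 2 * (norm (y - z))\<^sup>2 \<le> Fa" using zr by (auto simp: K_def)
    define w where "w = z - y"
    have zw: "z = y + w" unfolding w_def by simp
    have ip: "- inner \<gamma> w \<le> G * norm w" unfolding G_def
      using Cauchy_Schwarz_ineq2[of \<gamma> w] by (simp add: abs_le_iff)
    have ny: "norm (y - z) = norm w" unfolding w_def by (simp add: norm_minus_commute)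
    have q: "c / 2 * (norm w)\<^sup>2 \<le> K0 + G * norm w"
    proof -
      have "inner \<gamma> z = inner \<gamma> y + inner \<gamma> w" unfolding zw by (simp add: inner_add_right)
      moreover have "Fa - \<alpha> - inner \<gamma> y \<le> K0" unfolding K0_def by simp
      ultimately show ?thesis using r1 r2 ip unfolding ny by linarith
    qed
    have nw: "norm w \<le> \<rho>"
    proof (cases "norm w \<le> 1")
      case True thus ?thesis unfolding \<rho>_def using G0 c by (simp add: add_increasing2)
    next
      case False
      hence "K0 \<le> K0 * norm w" using G0 by (simp add: mult_le_cancel_left1)
      with q have "c / 2 * (norm w * norm w) \<le> (K0 + G) * norm w" by (simp add: power2_eq_square algebra_simps)
      hence "c / 2 * norm w \<le> K0 + G" using False
        by (metis mult.assoc mult_le_cancel_right not_less zero_less_one less_trans)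
      hence "norm w \<le> 2 * (K0 + G) / c" using c by (simp add: field_simps)
      thus ?thesis unfolding \<rho>_def by simp
    qed
    have "lo \<le> r"
    proof -
      have "- inner \<gamma> w \<le> G * \<rho>" using ip nw G0 by (meson mult_left_mono order_trans)
      thus ?thesis using r1 unfolding lo_def zw by (simp add: inner_add_right)
    qed
    moreover have "r \<le> Fa" using r2 by (smt (verit) zero_le_power2 c mult_nonneg_nonneg divide_nonneg_nonneg)
    ultimately show ?thesis using nw w_def by simp
  qed
  have cpt: "compact K"
  proof -
    have "K \<subseteq> cball y \<rho> \<times> {lo..Fa}"
      using bnd by (force simp: dist_norm norm_minus_commute)
    hence "K = (cball y \<rho> \<times> {lo..Fa}) \<inter> K" by blast
    moreover have "compact ((cball y \<rho> \<times> {lo..Fa}) \<inter> K)"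
      by (intro compact_Int_closed compact_Times compact_cball compact_Icc clK)
    ultimately show ?thesis by simp
  qed
  have ne: "(a, va) \<in> K" using fa by (simp add: K_def epigraph_def Fa_def)
  have "continuous_on K (\<lambda>p. snd p + c / 2 * (norm (y - fst p))\<^sup>2)"
    by (intro continuous_intros)
  from continuous_attains_inf[OF cpt _ this] ne
  obtain p where pK: "p \<in> K" and pmin: "\<And>q. q \<in> K \<Longrightarrow>
      snd p + c / 2 * (norm (y - fst p))\<^sup>2 \<le> snd q + c / 2 * (norm (y - fst q))\<^sup>2"
    by blast
  obtain m rm where p: "p = (m, rm)" by (cases p)
  have fmr: "f m \<le> ereal rm" using pK p by (simp add: K_def epigraph_def)
  have "ereal (\<alpha> + inner \<gamma> m) \<le> f m" by (rule aff)
  then obtain vm where fm: "f m = ereal vm" using fmr by (cases "f m") auto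
  have vmr: "vm \<le> rm" using fmr fm by simp
  have pF: "rm + c / 2 * (norm (y - m))\<^sup>2 \<le> Fa" using pK p by (simp add: K_def)
  have "f m + ereal (c / 2 * (norm (y - m))\<^sup>2) \<le> f z + ereal (c / 2 * (norm (y - z))\<^sup>2)" for z
  proof (cases "f z")
    case PInf thus ?thesis using fm by simp
  next
    case MInf thus ?thesis using aff[of z] by simp
  next
    case (real vz)
    show ?thesis
    proof (cases "vz + c / 2 * (norm (y - z))\<^sup>2 \<le> Fa")
      case True
      hence "(z, vz) \<in> K" using real by (simp add: K_def epigraph_def)
      from pmin[OF this] p have "rm + c / 2 * (norm (y - m))\<^sup>2 \<le> vz + c / 2 * (norm (y - z))\<^sup>2" by simp
      thus ?thesis using fm real vmr by simp
    next
      case False thus ?thesis using fm real vmr pF by simp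
    qed
  qed
  thus ?thesis using fm by blast
qed

lemma eps_nat:
  fixes A B C :: real
  assumes "\<And>n::nat. n \<ge> 1 \<Longrightarrow> A \<le> C + B / real n"
  shows "A \<le> C"
proof (rule ccontr)
  assume "\<not> A \<le> C"
  hence d: "A - C > 0" by simp
  obtain n :: nat where n: "\<bar>B\<bar> / (A - C) < real n" using reals_Archimedean2 by blast
  have "0 \<le> \<bar>B\<bar> / (A - C)" using d by simp
  hence "real n > 0" using n by linarith
  hence n1: "n \<ge> 1" by simp
  have "\<bar>B\<bar> < (A - C) * real n" using n d by (simp add: field_simps)
  hence "B / real n < A - C" using n1 by (simp add: field_simps)
  thus False using assms[OF n1] by simp
qed

lemma sum_kplus1: "(\<Sum>k<n. real (k + 1)) = real n * (real n + 1) / 2"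
  by (induction n) (simp_all add: field_simps)

locale necs =
  fixes f :: "'a::euclidean_space \<Rightarrow> ereal" and \<mu> :: real and L' :: real
  assumes fF: "f \<in> FmuL \<mu> (ereal L')" and mu0: "0 \<le> \<mu>" and muL: "\<mu> < L'"
begin

lemma FmuLD: "\<forall>x. f x \<noteq> -\<infinity>" "closed (epigraph f)" "convex (epigraph f)"
  "\<forall>x1 x2 g1 g2. g1 \<in> subdiff f x1 \<longrightarrow> g2 \<in> subdiff f x2 \<longrightarrow>
        inv_L (ereal L') * norm (g1 - g2) \<le> norm (x1 - x2)"
  "convex (epigraph (\<lambda>x. f x - ereal (\<mu> / 2 * (norm x)\<^sup>2)))"
  using fF by (simp_all add: FmuL_def)

lemma L'pos: "L' > 0" using mu0 muL by simp

lemma lipg: "g1 \<in> subdiff f x1 \<Longrightarrow> g2 \<in> subdiff f x2 \<Longrightarrow> norm (g1 - g2) \<le> L' * norm (x1 - x2)"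
proof -
  assume a: "g1 \<in> subdiff f x1" "g2 \<in> subdiff f x2"
  have "inv_L (ereal L') * norm (g1 - g2) \<le> norm (x1 - x2)" using FmuLD(4) a by blast
  hence "norm (g1 - g2) / L' \<le> norm (x1 - x2)" by (simp add: inv_L_def)
  thus ?thesis using L'pos by (simp add: field_simps)
qed

lemma grad_unique: "g1 \<in> subdiff f x \<Longrightarrow> g2 \<in> subdiff f x \<Longrightarrow> g1 = g2"
  using lipg[of g1 x g2 x] by simp

lemma notMInf: "f x \<noteq> -\<infinity>" using FmuLD(1) by blast

lemma sub_fin: "g \<in> subdiff f x \<Longrightarrow> \<exists>v. f x = ereal v"
  using notMInf[of x] unfolding subdiff_def by (cases "f x") auto

lemma D_closed: "closed {x. subdiff f x \<noteq> {}}"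
  unfolding closed_sequential_limits
proof (intro allI impI, elim conjE)
  fix p :: "nat \<Rightarrow> 'a" and l
  assume pD: "\<forall>n. p n \<in> {x. subdiff f x \<noteq> {}}" and pl: "p \<longlonglongrightarrow> l"
  define \<gamma> where "\<gamma> n = (SOME g. g \<in> subdiff f (p n))" for n
  have \<gamma>: "\<gamma> n \<in> subdiff f (p n)" for n
  proof -
    have "\<exists>g. g \<in> subdiff f (p n)" using pD by auto
    thus ?thesis unfolding \<gamma>_def by (rule someI_ex)
  qed
  define fv where "fv n = real_of_ereal (f (p n))" for n
  have fv: "f (p n) = ereal (fv n)" for n using sub_fin[OF \<gamma>[of n]] unfolding fv_def by auto
  have cp: "Cauchy p" using pl by (rule LIMSEQ_imp_Cauchy)
  have "Cauchy \<gamma>"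
  proof (rule metric_CauchyI)
    fix e :: real assume e: "e > 0"
    obtain M where M: "\<And>m n. m \<ge> M \<Longrightarrow> n \<ge> M \<Longrightarrow> dist (p m) (p n) < e / L'"
      using metric_CauchyD[OF cp, of "e / L'"] e L'pos by auto
    show "\<exists>M. \<forall>m\<ge>M. \<forall>n\<ge>M. dist (\<gamma> m) (\<gamma> n) < e"
    proof (intro exI allI impI)
      fix m n assume "m \<ge> M" "n \<ge> M"
      hence "L' * dist (p m) (p n) < e" using M L'pos by (simp add: field_simps)
      moreover have "dist (\<gamma> m) (\<gamma> n) \<le> L' * dist (p m) (p n)"
        using lipg[OF \<gamma>[of m] \<gamma>[of n]] by (simp add: dist_norm)
      ultimately show "dist (\<gamma> m) (\<gamma> n) < e" by simp
    qed
  qed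
  then obtain \<gamma>l where \<gamma>l: "\<gamma> \<longlonglongrightarrow> \<gamma>l" using Cauchy_convergent convergent_def by blast
  obtain B where B: "\<And>n. norm (\<gamma> n) \<le> B" "B > 0"
    using convergent_imp_bounded[of \<gamma>] \<gamma>l unfolding bounded_pos convergent_def by fastforce
  have fvl: "\<bar>fv m - fv n\<bar> \<le> B * dist (p m) (p n)" for m n
  proof -
    have "f (p n) + ereal (inner (\<gamma> n) (p m - p n)) \<le> f (p m)" using \<gamma>[of n] unfolding subdiff_def by blast
    hence s1: "fv n + inner (\<gamma> n) (p m - p n) \<le> fv m" using fv by simp
    have "f (p m) + ereal (inner (\<gamma> m) (p n - p m)) \<le> f (p n)" using \<gamma>[of m] unfolding subdiff_def by blast
    hence s2: "fv m + inner (\<gamma> m) (p n - p m) \<le> fv n" using fv by simp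
    have "\<bar>inner (\<gamma> n) (p m - p n)\<bar> \<le> norm (\<gamma> n) * norm (p m - p n)" by (rule Cauchy_Schwarz_ineq2)
    also have "\<dots> \<le> B * norm (p m - p n)" by (rule mult_right_mono[OF B(1)]) simp
    finally have c1: "\<bar>inner (\<gamma> n) (p m - p n)\<bar> \<le> B * dist (p m) (p n)" by (simp add: dist_norm)
    have "\<bar>inner (\<gamma> m) (p n - p m)\<bar> \<le> norm (\<gamma> m) * norm (p n - p m)" by (rule Cauchy_Schwarz_ineq2)
    also have "\<dots> \<le> B * norm (p n - p m)" by (rule mult_right_mono[OF B(1)]) simp
    finally have "\<bar>inner (\<gamma> m) (p n - p m)\<bar> \<le> B * dist (p m) (p n)" by (simp add: dist_norm norm_minus_commute)
    with c1 show ?thesis using s1 s2 by (simp add: abs_le_iff)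
  qed
  have "Cauchy fv"
  proof (rule metric_CauchyI)
    fix e :: real assume e: "e > 0"
    obtain M where M: "\<And>m n. m \<ge> M \<Longrightarrow> n \<ge> M \<Longrightarrow> dist (p m) (p n) < e / B"
      using metric_CauchyD[OF cp, of "e / B"] e B(2) by auto
    show "\<exists>M. \<forall>m\<ge>M. \<forall>n\<ge>M. dist (fv m) (fv n) < e"
    proof (intro exI allI impI)
      fix m n assume "m \<ge> M" "n \<ge> M"
      hence "B * dist (p m) (p n) < e" using M B(2) by (simp add: field_simps)
      thus "dist (fv m) (fv n) < e" using fvl[of m n] by (simp add: dist_real_def)
    qed
  qed
  then obtain Fl where Fl: "fv \<longlonglongrightarrow> Fl" using Cauchy_convergent convergent_def by blast
  have cl: "closed (epigraph f)" by (rule FmuLD(2))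
  have lim: "(\<lambda>n. (p n, fv n)) \<longlonglongrightarrow> (l, Fl)" using pl Fl by (rule tendsto_Pair)
  have mem: "(p n, fv n) \<in> epigraph f" for n using fv by (simp add: epigraph_def)
  have "(l, Fl) \<in> epigraph f" by (rule closed_sequentially[OF cl mem lim])
  hence flF: "f l \<le> ereal Fl" by (simp add: epigraph_def)
  have "f l + ereal (inner \<gamma>l (z - l)) \<le> f z" for z
  proof (cases "f z")
    case (real vz)
    have "fv n + inner (\<gamma> n) (z - p n) \<le> vz" for n
    proof -
      have "f (p n) + ereal (inner (\<gamma> n) (z - p n)) \<le> f z" using \<gamma>[of n] unfolding subdiff_def by blast
      thus ?thesis using fv real by simp
    qed
    moreover have "(\<lambda>n. fv n + inner (\<gamma> n) (z - p n)) \<longlonglongrightarrow> Fl + inner \<gamma>l (z - l)"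
      by (intro tendsto_intros Fl \<gamma>l pl)
    ultimately have "Fl + inner \<gamma>l (z - l) \<le> vz" by (meson LIMSEQ_le_const2)
    hence "ereal Fl + ereal (inner \<gamma>l (z - l)) \<le> f z" using real by simp
    thus ?thesis using flF by (meson add_right_mono order_trans)
  next
    case PInf thus ?thesis by simp
  next
    case MInf thus ?thesis using notMInf by simp
  qed
  moreover have "f l \<noteq> \<infinity>" using flF by auto
  ultimately have "\<gamma>l \<in> subdiff f l" unfolding subdiff_def by simp
  thus "l \<in> {x. subdiff f x \<noteq> {}}" by auto
qed

end

context necs begin

lemma D_univ:
  assumes ga: "ga \<in> subdiff f a"
  shows "subdiff f y \<noteq> {}"
proof (rule ccontr)
  assume yD: "\<not> subdiff f y \<noteq> {}"
  define D where "D = {x. subdiff f x \<noteq> {}}"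
  have yD': "y \<notin> D" using yD by (simp add: D_def)
  have Dne: "D \<noteq> {}" using ga by (auto simp: D_def)
  have \<delta>: "infdist y D > 0" using infdist_pos_not_in_closed[OF D_closed[folded D_def] Dne yD'] .
  define \<delta>' where "\<delta>' = infdist y D"
  define G where "G = norm ga"
  define c where "c = L' + (G + L' * norm (y - a) + 1) / \<delta>'"
  have cpos: "c > 0" using \<delta> L'pos unfolding c_def \<delta>'_def G_def
    by (intro add_pos_nonneg divide_nonneg_pos) auto
  obtain va where fa: "f a = ereal va" using sub_fin[OF ga] by auto
  have aff: "ereal ((va - inner ga a) + inner ga z) \<le> f z" for z
  proof -
    have "f a + ereal (inner ga (z - a)) \<le> f z" using ga unfolding subdiff_def by blast
    moreover have "va - inner ga a + inner ga z = va + (inner ga z - inner ga a)" by simp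
    ultimately show ?thesis using fa by (simp add: inner_diff_right algebra_simps)
  qed
  obtain m vm where fm: "f m = ereal vm" and mn:
    "\<And>z. f m + ereal (c / 2 * (norm (y - m))\<^sup>2) \<le> f z + ereal (c / 2 * (norm (y - z))\<^sup>2)"
    using min_exists[OF FmuLD(2) fa aff cpos, of y] by blast
  have gm: "c *\<^sub>R (y - m) \<in> subdiff f m" by (rule min_sub[OF FmuLD(3) fm mn])
  hence "m \<in> D" by (auto simp: D_def)
  hence s\<delta>: "\<delta>' \<le> norm (y - m)" unfolding \<delta>'_def using infdist_le[of m D y] by (simp add: dist_norm)
  define s where "s = norm (y - m)"
  have l: "norm (c *\<^sub>R (y - m) - ga) \<le> L' * norm (m - a)" by (rule lipg[OF gm ga])
  have "c * s \<le> G + norm (c *\<^sub>R (y - m) - ga)"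
    using norm_triangle_ineq2[of "c *\<^sub>R (y - m)" ga] cpos unfolding s_def G_def by simp
  also have "\<dots> \<le> G + L' * (s + norm (y - a))"
  proof -
    have "norm (m - a) \<le> norm (m - y) + norm (y - a)" using norm_triangle_ineq[of "m - y" "y - a"] by simp
    hence "norm (m - a) \<le> s + norm (y - a)" unfolding s_def by (simp add: norm_minus_commute)
    hence "L' * norm (m - a) \<le> L' * (s + norm (y - a))" using L'pos by simp
    thus ?thesis using l by simp
  qed
  finally have "s * (c - L') \<le> G + L' * norm (y - a)" by (simp add: algebra_simps)
  moreover have "\<delta>' * (c - L') \<le> s * (c - L')"
    using s\<delta> \<delta> L'pos unfolding s_def c_def \<delta>'_def G_def by (intro mult_right_mono) (auto intro!: divide_nonneg_pos add_nonneg_nonneg)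
  moreover have "\<delta>' * (c - L') = G + L' * norm (y - a) + 1" using \<delta> unfolding c_def \<delta>'_def by simp
  ultimately show False by simp
qed

end

locale necs2 = necs +
  fixes a0 g0
  assumes g0: "g0 \<in> subdiff f a0"
begin

definition grad where "grad x = (SOME g. g \<in> subdiff f x)"
definition F where "F x = real_of_ereal (f x)"

lemma grad: "grad x \<in> subdiff f x"
proof -
  have "\<exists>g. g \<in> subdiff f x" using D_univ[OF g0, of x] by auto
  thus ?thesis unfolding grad_def by (rule someI_ex)
qed

lemma fF_eq: "f x = ereal (F x)"
  using sub_fin[OF grad[of x]] unfolding F_def by auto

lemma sub_eq: "g \<in> subdiff f x \<Longrightarrow> g = grad x"
  using grad_unique grad by blast

lemma sub_ineq: "F x + inner (grad x) (y - x) \<le> F y"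
proof -
  have "f x + ereal (inner (grad x) (y - x)) \<le> f y" using grad[of x] unfolding subdiff_def by blast
  thus ?thesis by (simp add: fF_eq)
qed

lemma lip: "norm (grad x - grad y) \<le> L' * norm (x - y)"
  by (rule lipg[OF grad grad])

lemma descent: "F (y + d) \<le> F y + inner (grad y) d + L' / 2 * (norm d)\<^sup>2"
proof -
  define D where "D = (norm d)\<^sup>2"
  have key: "F (y + d) - F y - inner (grad y) d \<le> L' / 2 * D + (L' / 2 * D) / real n" if n: "n \<ge> 1" for n :: nat
  proof -
    define pt where "pt k = y + (real k / real n) *\<^sub>R d" for k :: nat
    have npos: "real n > 0" using n by simp
    have step: "F (pt (Suc k)) - F (pt k) \<le> (inner (grad y) d + L' * (real (k + 1) / real n) * D) / real n" for k
    proof -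
      have s: "F (pt (Suc k)) + inner (grad (pt (Suc k))) (pt k - pt (Suc k)) \<le> F (pt k)" by (rule sub_ineq)
      have "pt (Suc k) = pt k + (1 / real n) *\<^sub>R d" unfolding pt_def
        by (simp add: add_divide_distrib scaleR_add_left)
      hence d1: "pt k - pt (Suc k) = - ((1 / real n) *\<^sub>R d)" by simp
      have "inner (grad (pt (Suc k))) d = inner (grad y) d + inner (grad (pt (Suc k)) - grad y) d"
        by (simp add: inner_diff_left)
      also have "\<dots> \<le> inner (grad y) d + norm (grad (pt (Suc k)) - grad y) * norm d"
        using Cauchy_Schwarz_ineq2[of "grad (pt (Suc k)) - grad y" d] by simp
      also have "\<dots> \<le> inner (grad y) d + L' * norm (pt (Suc k) - y) * norm d"
        using lip[of "pt (Suc k)" y] by (simp add: mult_right_mono)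
      also have "norm (pt (Suc k) - y) = real (k + 1) / real n * norm d" unfolding pt_def using npos by simp
      finally have i: "inner (grad (pt (Suc k))) d \<le> inner (grad y) d + L' * (real (k + 1) / real n) * D"
        unfolding D_def by (simp add: power2_eq_square mult.assoc)
      have "F (pt (Suc k)) - F (pt k) \<le> inner (grad (pt (Suc k))) d / real n"
        using s unfolding d1 by (simp add: inner_minus_right)
      also have "\<dots> \<le> (inner (grad y) d + L' * (real (k + 1) / real n) * D) / real n"
        using i npos by (simp add: divide_right_mono)
      finally show ?thesis .
    qed
    have tel: "(\<Sum>k<n. F (pt (Suc k)) - F (pt k)) = F (pt n) - F (pt 0)"
      by (rule sum_lessThan_telescope)
    have "pt n = y + d" "pt 0 = y" unfolding pt_def using npos by auto
    hence "F (y + d) - F y = (\<Sum>k<n. F (pt (Suc k)) - F (pt k))" using tel by simp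
    also have "\<dots> \<le> (\<Sum>k<n. (inner (grad y) d + L' * (real (k + 1) / real n) * D) / real n)"
      by (rule sum_mono) (rule step)
    also have "\<dots> = (\<Sum>k<n. inner (grad y) d / real n + L' * D / (real n * real n) * real (k + 1))"
    proof (rule sum.cong[OF refl])
      fix k show "(inner (grad y) d + L' * (real (k + 1) / real n) * D) / real n =
          inner (grad y) d / real n + L' * D / (real n * real n) * real (k + 1)"
        using npos by (simp add: field_simps)
    qed
    also have "\<dots> = (\<Sum>k<n. inner (grad y) d / real n) + L' * D / (real n * real n) * (\<Sum>k<n. real (k + 1))"
      by (simp only: sum.distrib sum_distrib_left)
    also have "\<dots> = inner (grad y) d + L' / 2 * D + (L' / 2 * D) / real n"
    proof -
      have "(\<Sum>k<n. inner (grad y) d / real n) = real n * (inner (grad y) d / real n)"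
        by (simp only: sum_constant card_lessThan)
      also have "\<dots> = inner (grad y) d" using npos by simp
      finally have e1: "(\<Sum>k<n. inner (grad y) d / real n) = inner (grad y) d" .
      have e2: "L' * D / (real n * real n) * (real n * (real n + 1) / 2) = L' / 2 * D + (L' / 2 * D) / real n"
        using npos by (simp add: field_simps)
      show ?thesis by (simp only: e1 sum_kplus1 e2 add.assoc)
    qed
    finally show ?thesis by linarith
  qed
  have "F (y + d) - F y - inner (grad y) d \<le> L' / 2 * D"
    by (rule eps_nat[OF key])
  thus ?thesis unfolding D_def by simp
qed

end

definition qc :: "real \<Rightarrow> ereal \<Rightarrow> ('a::euclidean_space \<times> 'a \<times> real) \<Rightarrow> ('a \<times> 'a \<times> real) \<Rightarrow> bool" where
  "qc \<mu> L ti tj = (case ti of (xi, gi, vi) \<Rightarrow> case tj of (xj, gj, vj) \<Rightarrow>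
     vj - vi + (coefL \<mu> L * inner gj (xi - xj) + coef1 \<mu> L / 2 * (norm (gi - gj))\<^sup>2
       + coefmu \<mu> L * inner gi (xj - xi) + coefLmu \<mu> L / 2 * (norm (xi - xj))\<^sup>2) \<le> 0)"

lemma real_conv:
  fixes vi vj A1 A2 N1 N2 L' \<mu> M :: real
  assumes M: "M = L' - \<mu>" "M > 0"
    and co: "vj + A1 + \<mu> / 2 * N2 + 1 / (2 * M) * (N1 - 2 * \<mu> * (A2 - A1) + \<mu>\<^sup>2 * N2) \<le> vi"
  shows "vj - vi + (L' / M * A1 + 1 / M / 2 * N1 + \<mu> / M * (- A2) + L' * \<mu> / M / 2 * N2) \<le> 0"
proof -
  have e: "L' / M * A1 + 1 / M / 2 * N1 + \<mu> / M * (- A2) + L' * \<mu> / M / 2 * N2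
      = A1 + \<mu> / 2 * N2 + 1 / (2 * M) * (N1 - 2 * \<mu> * (A2 - A1) + \<mu>\<^sup>2 * N2)"
  proof -
    have L': "L' = M + \<mu>" using M by simp
    show ?thesis unfolding L' using M(2) by (simp add: field_simps power2_eq_square)
  qed
  show ?thesis unfolding e using co by linarith
qed

context necs2 begin

definition H where "H z = F z - \<mu> / 2 * (norm z)\<^sup>2"
definition ag where "ag z = grad z - \<mu> *\<^sub>R z"

lemma hconv: "H w + inner (ag w) (z - w) \<le> H z"
proof -
  have s: "F w + inner (grad w) (z - w) + \<mu> / 2 * (norm (z - w))\<^sup>2 \<le> F z"
    by (rule strong_ineq[OF FmuLD(5) fF_eq fF_eq grad])
  have "z = w + (z - w)" by simp
  then have "(norm z)\<^sup>2 = (norm w)\<^sup>2 + 2 * inner w (z - w) + (norm (z - w))\<^sup>2"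
    by (metis normsq_expand(1))
  hence e1: "\<mu> / 2 * (norm z)\<^sup>2 = \<mu> / 2 * (norm w)\<^sup>2 + \<mu> * inner w (z - w) + \<mu> / 2 * (norm (z - w))\<^sup>2"
    by (simp only:) (simp add: algebra_simps)
  have e2: "inner (ag w) (z - w) = inner (grad w) (z - w) - \<mu> * inner w (z - w)"
    by (simp add: ag_def inner_diff_left)
  show ?thesis using s e1 e2 unfolding H_def by linarith
qed

lemma hdesc: "H (w + d) \<le> H w + inner (ag w) d + (L' - \<mu>) / 2 * (norm d)\<^sup>2"
proof -
  have s: "F (w + d) \<le> F w + inner (grad w) d + L' / 2 * (norm d)\<^sup>2" by (rule descent)
  have "(norm (w + d))\<^sup>2 = (norm w)\<^sup>2 + 2 * inner w d + (norm d)\<^sup>2" by (rule normsq_expand(1))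
  hence e1: "\<mu> / 2 * (norm (w + d))\<^sup>2 = \<mu> / 2 * (norm w)\<^sup>2 + \<mu> * inner w d + \<mu> / 2 * (norm d)\<^sup>2"
    by (simp only:) (simp add: algebra_simps)
  have e2: "inner (ag w) d = inner (grad w) d - \<mu> * inner w d"
    by (simp add: ag_def inner_diff_left)
  have e3: "(L' - \<mu>) / 2 * (norm d)\<^sup>2 = L' / 2 * (norm d)\<^sup>2 - \<mu> / 2 * (norm d)\<^sup>2"
    by (simp add: diff_divide_distrib left_diff_distrib)
  show ?thesis using s e1 e2 e3 unfolding H_def by linarith
qed

lemma coco:
  "H xj + inner (ag xj) (xi - xj) + 1 / (2 * (L' - \<mu>)) * (norm (ag xi - ag xj))\<^sup>2 \<le> H xi"
proof -
  define M where "M = L' - \<mu>"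
  have M: "M > 0" using muL unfolding M_def by simp
  define e where "e = ag xi - ag xj"
  define d where "d = - ((1 / M) *\<^sub>R e)"
  have A: "H (xi + d) \<le> H xi + inner (ag xi) d + M / 2 * (norm d)\<^sup>2" unfolding M_def by (rule hdesc)
  have B: "H xj + inner (ag xj) (xi + d - xj) \<le> H (xi + d)" by (rule hconv)
  have nd: "(norm d)\<^sup>2 = (norm e)\<^sup>2 / M\<^sup>2" unfolding d_def using M
    by (simp add: power_divide power2_eq_square)
  have "inner (ag xj) (xi + d - xj) - inner (ag xi) d = inner (ag xj) (xi - xj) + inner e (- d)"
    unfolding e_def by (simp add: inner_diff_left inner_add_right inner_diff_right)
  also have "inner e (- d) = (norm e)\<^sup>2 / M" unfolding d_def by (simp add: power2_norm_eq_inner)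
  finally have C: "inner (ag xj) (xi + d - xj) - inner (ag xi) d = inner (ag xj) (xi - xj) + (norm e)\<^sup>2 / M" .
  have "M / 2 * (norm d)\<^sup>2 = (norm e)\<^sup>2 / (2 * M)" unfolding nd using M by (simp add: power2_eq_square field_simps)
  moreover have "(norm e)\<^sup>2 / M - (norm e)\<^sup>2 / (2 * M) = 1 / (2 * M) * (norm e)\<^sup>2" using M by (simp add: field_simps)
  ultimately show ?thesis using A B C unfolding M_def[symmetric] e_def[symmetric] by linarith
qed

lemma nec_fin:
  assumes gi: "gi \<in> subdiff f xi" and gj: "gj \<in> subdiff f xj"
    and fi: "f xi = ereal vi" and fj: "f xj = ereal vj"
  shows "qc \<mu> (ereal L') (xi, gi, vi) (xj, gj, vj)"
proof -
  have gi': "gi = grad xi" and gj': "gj = grad xj" using sub_eq gi gj by auto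
  have vi: "vi = F xi" and vj: "vj = F xj" using fi fj fF_eq by (metis ereal.inject)+
  define M where "M = L' - \<mu>"
  have M: "M > 0" using muL unfolding M_def by simp
  define u where "u = xi - xj"
  have co: "H xj + inner (ag xj) u + 1 / (2 * M) * (norm (ag xi - ag xj))\<^sup>2 \<le> H xi"
    using coco unfolding M_def u_def .
  have aa: "ag xi - ag xj = (gi - gj) - \<mu> *\<^sub>R u" unfolding ag_def gi' gj' u_def by (simp add: algebra_simps)
  have n1: "(norm (ag xi - ag xj))\<^sup>2 = (norm (gi - gj))\<^sup>2 - 2 * \<mu> * (inner gi u - inner gj u) + \<mu>\<^sup>2 * (norm u)\<^sup>2"
    unfolding aa normsq_expand by (simp add: inner_diff_left power_mult_distrib)
  have xi: "xi = xj + u" unfolding u_def by simp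
  have n2: "(norm xi)\<^sup>2 = (norm xj)\<^sup>2 + 2 * inner xj u + (norm u)\<^sup>2" unfolding xi by (rule normsq_expand(1))
  have i2: "inner (ag xj) u = inner gj u - \<mu> * inner xj u" unfolding ag_def gj' by (simp add: inner_diff_left)
  have co': "vj + inner gj u + \<mu> / 2 * (norm u)\<^sup>2 + 1 / (2 * M) * ((norm (gi - gj))\<^sup>2 - 2 * \<mu> * (inner gi u - inner gj u) + \<mu>\<^sup>2 * (norm u)\<^sup>2) \<le> vi"
    using co unfolding H_def n1 n2 i2 vi[symmetric] vj[symmetric] by (simp add: algebra_simps)
  have r: "vj - vi + (L' / M * inner gj u + 1 / M / 2 * (norm (gi - gj))\<^sup>2 + \<mu> / M * (- inner gi u) + L' * \<mu> / M / 2 * (norm u)\<^sup>2) \<le> 0"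
    by (rule real_conv[OF M_def M co'])
  have "inner gi (xj - xi) = - inner gi u" unfolding u_def by (simp add: inner_diff_right)
  thus ?thesis using r unfolding qc_def coefL_def coef1_def coefmu_def coefLmu_def M_def u_def
    by simp
qed

end

lemma nec:
  fixes f :: "'a::euclidean_space \<Rightarrow> ereal"
  assumes fF: "f \<in> FmuL \<mu> L" and mu0: "0 \<le> \<mu>" and muL: "ereal \<mu> < L"
    and gi: "gi \<in> subdiff f xi" and gj: "gj \<in> subdiff f xj"
    and fi: "f xi = ereal vi" and fj: "f xj = ereal vj"
  shows "qc \<mu> L (xi, gi, vi) (xj, gj, vj)"
proof (cases L)
  case (real L')
  interpret necs2 f \<mu> L' xj gj
    by unfold_locales (use fF real mu0 muL gj in auto)
  show ?thesis using nec_fin[OF gi gj fi fj] real by simp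
next
  case PInf
  have cv: "convex (epigraph (\<lambda>x. f x - ereal (\<mu> / 2 * (norm x)\<^sup>2)))" using fF by (simp add: FmuL_def)
  have "vj + inner gj (xi - xj) + \<mu> / 2 * (norm (xi - xj))\<^sup>2 \<le> vi"
    by (rule strong_ineq[OF cv fi fj gj])
  thus ?thesis unfolding qc_def coefL_def coef1_def coefmu_def coefLmu_def PInf by simp
next
  case MInf thus ?thesis using muL by simp
qed

lemma max_aff_conv:
  fixes A :: "'s \<Rightarrow> 'a::real_vector \<Rightarrow> real"
  assumes fin: "finite S" "S \<noteq> {}"
    and aff: "\<And>s x y t. s \<in> S \<Longrightarrow> A s ((1 - t) *\<^sub>R x + t *\<^sub>R y) = (1 - t) * A s x + t * A s y"
    and t: "0 \<le> t" "t \<le> 1"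
  shows "Max ((\<lambda>s. A s ((1 - t) *\<^sub>R x + t *\<^sub>R y)) ` S) \<le> (1 - t) * Max ((\<lambda>s. A s x) ` S) + t * Max ((\<lambda>s. A s y) ` S)"
proof -
  have fi: "finite ((\<lambda>s. A s z) ` S)" "(\<lambda>s. A s z) ` S \<noteq> {}" for z using fin by auto
  obtain s where s: "s \<in> S" "Max ((\<lambda>s. A s ((1 - t) *\<^sub>R x + t *\<^sub>R y)) ` S) = A s ((1 - t) *\<^sub>R x + t *\<^sub>R y)"
    using Max_in[OF fi] by fastforce
  have "A s x \<le> Max ((\<lambda>s. A s x) ` S)" "A s y \<le> Max ((\<lambda>s. A s y) ` S)" using s(1) fi by auto
  hence "(1 - t) * A s x + t * A s y \<le> (1 - t) * Max ((\<lambda>s. A s x) ` S) + t * Max ((\<lambda>s. A s y) ` S)"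
    using t by (intro add_mono mult_left_mono) auto
  thus ?thesis using s aff by simp
qed

lemma max_closed:
  fixes A :: "'s \<Rightarrow> 'a::euclidean_space \<Rightarrow> real"
  assumes fin: "finite S" "S \<noteq> {}" and c: "\<And>s. s \<in> S \<Longrightarrow> continuous_on UNIV (A s)"
    and q: "continuous_on UNIV q"
  shows "closed (epigraph (\<lambda>z. ereal (Max ((\<lambda>s. A s z) ` S) + q z)))"
proof -
  have "epigraph (\<lambda>z. ereal (Max ((\<lambda>s. A s z) ` S) + q z)) = (\<Inter>s\<in>S. {p. A s (fst p) + q (fst p) \<le> snd p})"
    using fin by (auto simp: epigraph_def Max_le_iff le_diff_eq[symmetric])
  also have "closed \<dots>"
  proof (intro closed_INT ballI)
    fix s assume "s \<in> S"
    have c1: "continuous_on UNIV (\<lambda>p::'a \<times> real. A s (fst p))"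
      by (rule continuous_on_compose2[OF c[OF \<open>s \<in> S\<close>] continuous_on_fst[OF continuous_on_id]]) auto
    have c2: "continuous_on UNIV (\<lambda>p::'a \<times> real. q (fst p))"
      by (rule continuous_on_compose2[OF q continuous_on_fst[OF continuous_on_id]]) auto
    have "continuous_on UNIV (\<lambda>p::'a \<times> real. A s (fst p) + q (fst p))"
      by (intro continuous_on_add c1 c2)
    thus "closed {p. A s (fst p) + q (fst p) \<le> (snd p :: real)}"
      by (rule closed_Collect_le) (intro continuous_intros)
  qed
  finally show ?thesis .
qed

lemma quad_conv:
  fixes x y :: "'a::real_inner"
  assumes "0 \<le> \<mu>" "0 \<le> t" "t \<le> 1"
  shows "\<mu> / 2 * (norm ((1 - t) *\<^sub>R x + t *\<^sub>R y))\<^sup>2 \<le> (1 - t) * (\<mu> / 2 * (norm x)\<^sup>2) + t * (\<mu> / 2 * (norm y)\<^sup>2)"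
proof -
  have e: "(norm ((1 - t) *\<^sub>R x + t *\<^sub>R y))\<^sup>2 = (1 - t) * (norm x)\<^sup>2 + t * (norm y)\<^sup>2 - t * (1 - t) * (norm (x - y))\<^sup>2"
    by (simp add: power2_norm_eq_inner inner_add_left inner_add_right inner_diff_left inner_diff_right
        inner_commute algebra_simps)
  have "0 \<le> t * (1 - t) * (norm (x - y))\<^sup>2" using assms by simp
  hence "(norm ((1 - t) *\<^sub>R x + t *\<^sub>R y))\<^sup>2 \<le> (1 - t) * (norm x)\<^sup>2 + t * (norm y)\<^sup>2" using e by linarith
  hence "\<mu> / 2 * (norm ((1 - t) *\<^sub>R x + t *\<^sub>R y))\<^sup>2 \<le> \<mu> / 2 * ((1 - t) * (norm x)\<^sup>2 + t * (norm y)\<^sup>2)"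
    using assms by (intro mult_left_mono) auto
  thus ?thesis by (simp add: field_simps)
qed

definition pinf :: "real \<Rightarrow> ('a::euclidean_space \<times> 'a \<times> real) \<Rightarrow> 'a \<Rightarrow> real" where
  "pinf \<mu> t z = snd (snd t) + inner (fst (snd t)) (z - fst t) + \<mu> / 2 * (norm (fst t))\<^sup>2 - \<mu> * inner z (fst t)"

lemma pinf_aff: "pinf \<mu> s ((1 - t) *\<^sub>R x + t *\<^sub>R y) = (1 - t) * pinf \<mu> s x + t * pinf \<mu> s y"
  unfolding pinf_def by (simp add: inner_add_left inner_add_right inner_diff_right inner_diff_left field_simps)

lemma pinf_eq: "pinf \<mu> (x, g, v) z + \<mu> / 2 * (norm z)\<^sup>2 = v + inner g (z - x) + \<mu> / 2 * (norm (z - x))\<^sup>2"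
  unfolding pinf_def by (simp add: normsq_expand(2) algebra_simps inner_commute)

lemma suff_inf:
  fixes S :: "('a::euclidean_space \<times> 'a \<times> real) set"
  assumes fin: "finite S" "S \<noteq> {}" and mu0: "0 \<le> \<mu>"
    and Q: "\<And>ti tj. ti \<in> S \<Longrightarrow> tj \<in> S \<Longrightarrow> qc \<mu> \<infinity> ti tj"
  shows "interpolable \<mu> \<infinity> S"
proof -
  define \<Phi>a where "\<Phi>a z = Max ((\<lambda>s. pinf \<mu> s z) ` S)" for z
  define f where "f z = ereal (\<Phi>a z + \<mu> / 2 * (norm z)\<^sup>2)" for z
  have fi: "finite ((\<lambda>s. pinf \<mu> s z) ` S)" "(\<lambda>s. pinf \<mu> s z) ` S \<noteq> {}" for z using fin by auto
  have convA: "\<Phi>a ((1 - t) *\<^sub>R x + t *\<^sub>R y) \<le> (1 - t) * \<Phi>a x + t * \<Phi>a y" if "0 \<le> t" "t \<le> 1" for x y t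
    unfolding \<Phi>a_def by (rule max_aff_conv[OF fin pinf_aff that])
  have e1: "epigraph (\<lambda>x. f x - ereal (\<mu> / 2 * (norm x)\<^sup>2)) = epigraph (\<lambda>x. ereal (\<Phi>a x))"
    unfolding f_def by simp
  have c1: "convex (epigraph (\<lambda>x. f x - ereal (\<mu> / 2 * (norm x)\<^sup>2)))"
    unfolding e1 by (rule conv_epi_real) (rule convA)
  have c2: "convex (epigraph f)" unfolding f_def
  proof (rule conv_epi_real)
    fix x y :: 'a and t :: real assume t: "0 \<le> t" "t \<le> 1"
    show "\<Phi>a ((1 - t) *\<^sub>R x + t *\<^sub>R y) + \<mu> / 2 * (norm ((1 - t) *\<^sub>R x + t *\<^sub>R y))\<^sup>2 \<le>
        (1 - t) * (\<Phi>a x + \<mu> / 2 * (norm x)\<^sup>2) + t * (\<Phi>a y + \<mu> / 2 * (norm y)\<^sup>2)"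
    proof -
      have a: "\<Phi>a ((1 - t) *\<^sub>R x + t *\<^sub>R y) \<le> (1 - t) * \<Phi>a x + t * \<Phi>a y" by (rule convA[OF t])
      have b: "\<mu> / 2 * (norm ((1 - t) *\<^sub>R x + t *\<^sub>R y))\<^sup>2 \<le> (1 - t) * (\<mu> / 2 * (norm x)\<^sup>2) + t * (\<mu> / 2 * (norm y)\<^sup>2)"
        by (rule quad_conv[OF mu0 t])
      have "\<And>P Q A B X Y. P \<le> (1 - t) * A + t * B \<Longrightarrow> Q \<le> (1 - t) * X + t * Y \<Longrightarrow>
          P + Q \<le> (1 - t) * (A + X) + t * (B + Y)" by (simp add: algebra_simps)
      from this[OF a b] show ?thesis .
    qed
  qed
  have cl: "closed (epigraph f)" unfolding f_def \<Phi>a_def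
    by (rule max_closed[OF fin]) (auto simp: pinf_def intro!: continuous_intros)
  have interp: "f x = ereal v \<and> g \<in> subdiff f x" if t: "(x, g, v) \<in> S" for x g v
  proof -
    have le: "pinf \<mu> s x + \<mu> / 2 * (norm x)\<^sup>2 \<le> v" if s: "s \<in> S" for s
    proof -
      obtain xj gj vj where sj: "s = (xj, gj, vj)" by (cases s) auto
      have "qc \<mu> \<infinity> (x, g, v) (xj, gj, vj)" using Q t s sj by simp
      hence "vj + inner gj (x - xj) + \<mu> / 2 * (norm (x - xj))\<^sup>2 \<le> v"
        unfolding qc_def coefL_def coef1_def coefmu_def coefLmu_def by simp
      thus ?thesis using pinf_eq[of \<mu> xj gj vj x] sj by simp
    qed
    have "\<Phi>a x = pinf \<mu> (x, g, v) x"
    proof (rule antisym)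
      have "\<forall>s\<in>S. pinf \<mu> s x \<le> pinf \<mu> (x, g, v) x"
      proof
        fix s assume "s \<in> S"
        from le[OF this] show "pinf \<mu> s x \<le> pinf \<mu> (x, g, v) x" using pinf_eq[of \<mu> x g v x] by simp
      qed
      thus "\<Phi>a x \<le> pinf \<mu> (x, g, v) x" unfolding \<Phi>a_def using fi by (simp add: Max_le_iff)
      show "pinf \<mu> (x, g, v) x \<le> \<Phi>a x" unfolding \<Phi>a_def using fi t by (intro Max_ge) auto
    qed
    hence fx: "f x = ereal v" unfolding f_def using pinf_eq[of \<mu> x g v x] by simp
    have "f x + ereal (inner g (y - x)) \<le> f y" for y
    proof -
      have "pinf \<mu> (x, g, v) y \<le> \<Phi>a y" unfolding \<Phi>a_def using fi t by (intro Max_ge) auto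
      hence "v + inner g (y - x) + \<mu> / 2 * (norm (y - x))\<^sup>2 \<le> \<Phi>a y + \<mu> / 2 * (norm y)\<^sup>2"
        using pinf_eq[of \<mu> x g v y] by linarith
      moreover have "0 \<le> \<mu> / 2 * (norm (y - x))\<^sup>2" using mu0 by simp
      ultimately show ?thesis using fx unfolding f_def by simp
    qed
    thus ?thesis using fx unfolding subdiff_def by simp
  qed
  have "f \<in> FmuL \<mu> \<infinity>"
    unfolding FmuL_def using c1 c2 cl by (simp add: f_def inv_L_def)
  thus ?thesis unfolding interpolable_def using interp by blast
qed

lemma real_eq:
  fixes A1 A2 N1 N2 L' \<mu> M :: real
  assumes M: "M = L' - \<mu>" "M > 0"
  shows "L' / M * A1 + 1 / M / 2 * N1 + \<mu> / M * (- A2) + L' * \<mu> / M / 2 * N2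
      = A1 + \<mu> / 2 * N2 + 1 / (2 * M) * (N1 - 2 * \<mu> * (A2 - A1) + \<mu>\<^sup>2 * N2)"
proof -
  have L': "L' = M + \<mu>" using M by simp
  show ?thesis unfolding L' using M(2) by (simp add: field_simps power2_eq_square)
qed

locale suffs =
  fixes S :: "('a::euclidean_space \<times> 'a \<times> real) set" and \<mu> L' :: real
  assumes fin: "finite S" "S \<noteq> {}" and mu0: "0 \<le> \<mu>" and muL: "\<mu> < L'"
    and Q: "\<And>ti tj. ti \<in> S \<Longrightarrow> tj \<in> S \<Longrightarrow> qc \<mu> (ereal L') ti tj"
begin

definition "M = L' - \<mu>"
definition "av t = fst (snd t) - \<mu> *\<^sub>R fst t"
definition "hv t = snd (snd t) - \<mu> / 2 * (norm (fst t))\<^sup>2"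
definition "zz t = fst t - (1 / M) *\<^sub>R av t"
definition "pv t = hv t - (norm (av t))\<^sup>2 / (2 * M)"
definition "piece t z = pv t + inner (av t) (z - zz t)"
definition "\<phi> z = Max ((\<lambda>t. piece t z) ` S)"
definition "\<Psi> x z = \<phi> z + M / 2 * (norm (x - z))\<^sup>2"

lemma Mpos: "M > 0" using muL unfolding M_def by simp

lemma hq:
  assumes ti: "ti \<in> S" and tj: "tj \<in> S"
  shows "hv tj + inner (av tj) (fst ti - fst tj) + 1 / (2 * M) * (norm (av ti - av tj))\<^sup>2 \<le> hv ti"
proof -
  obtain xi gi vi where ti': "ti = (xi, gi, vi)" by (cases ti) auto
  obtain xj gj vj where tj': "tj = (xj, gj, vj)" by (cases tj) auto
  define u where "u = xi - xj"
  have q: "vj - vi + (L' / M * inner gj u + 1 / M / 2 * (norm (gi - gj))\<^sup>2 + \<mu> / M * (- inner gi u)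
      + L' * \<mu> / M / 2 * (norm u)\<^sup>2) \<le> 0"
  proof -
    have "qc \<mu> (ereal L') (xi, gi, vi) (xj, gj, vj)" using Q[OF ti tj] ti' tj' by simp
    moreover have "inner gi (xj - xi) = - inner gi u" unfolding u_def by (simp add: inner_diff_right)
    ultimately show ?thesis unfolding qc_def coefL_def coef1_def coefmu_def coefLmu_def M_def u_def
      by simp
  qed
  have co: "vj + inner gj u + \<mu> / 2 * (norm u)\<^sup>2 + 1 / (2 * M) * ((norm (gi - gj))\<^sup>2 - 2 * \<mu> * (inner gi u - inner gj u) + \<mu>\<^sup>2 * (norm u)\<^sup>2) \<le> vi"
    using q unfolding real_eq[OF M_def Mpos] by linarith
  have aa: "av ti - av tj = (gi - gj) - \<mu> *\<^sub>R u" unfolding av_def ti' tj' u_def by (simp add: algebra_simps)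
  have n1: "(norm (av ti - av tj))\<^sup>2 = (norm (gi - gj))\<^sup>2 - 2 * \<mu> * (inner gi u - inner gj u) + \<mu>\<^sup>2 * (norm u)\<^sup>2"
    unfolding aa normsq_expand by (simp add: inner_diff_left power_mult_distrib)
  have xi: "xi = xj + u" unfolding u_def by simp
  have n2: "\<mu> / 2 * (norm xi)\<^sup>2 = \<mu> / 2 * (norm xj)\<^sup>2 + \<mu> * inner xj u + \<mu> / 2 * (norm u)\<^sup>2"
    unfolding xi normsq_expand(1) by (simp add: algebra_simps)
  have i2: "inner (av tj) u = inner gj u - \<mu> * inner xj u" unfolding av_def tj' by (simp add: inner_diff_left)
  have f: "fst ti = xi" "fst tj = xj" "hv ti = vi - \<mu> / 2 * (norm xi)\<^sup>2" "hv tj = vj - \<mu> / 2 * (norm xj)\<^sup>2"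
    unfolding ti' tj' hv_def by simp_all
  show ?thesis unfolding f u_def[symmetric] n1 i2 using co n2 by linarith
qed

lemma piece_le:
  assumes ti: "ti \<in> S" and tj: "tj \<in> S"
  shows "piece tj (zz ti) \<le> pv ti"
proof -
  define ai aj where "ai = av ti" and "aj = av tj"
  define u where "u = fst ti - fst tj"
  have h: "hv tj + inner aj u + 1 / (2 * M) * (norm (ai - aj))\<^sup>2 \<le> hv ti"
    using hq[OF ti tj] unfolding ai_def aj_def u_def .
  have z: "zz ti - zz tj = u - (1 / M) *\<^sub>R (ai - aj)" unfolding zz_def u_def ai_def aj_def by (simp add: algebra_simps)
  have "piece tj (zz ti) = hv tj - (norm aj)\<^sup>2 / (2 * M) + inner aj u - inner aj (ai - aj) / M"
    unfolding piece_def pv_def z aj_def[symmetric] by (simp add: inner_diff_right)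
  also have "\<dots> = hv tj + inner aj u + 1 / (2 * M) * (norm (ai - aj))\<^sup>2 - (norm ai)\<^sup>2 / (2 * M)"
  proof -
    define K where "K = 1 / (2 * M)"
    have "(norm (ai - aj))\<^sup>2 = (norm ai)\<^sup>2 - 2 * inner ai aj + (norm aj)\<^sup>2" by (rule normsq_expand(2))
    hence k1: "K * (norm (ai - aj))\<^sup>2 = K * (norm ai)\<^sup>2 - 2 * (K * inner ai aj) + K * (norm aj)\<^sup>2"
      by (simp only:) (simp add: algebra_simps)
    have "inner aj (ai - aj) = inner ai aj - (norm aj)\<^sup>2"
      by (simp add: inner_diff_right inner_commute power2_norm_eq_inner)
    hence k2: "inner aj (ai - aj) / M = 2 * (K * inner ai aj) - 2 * (K * (norm aj)\<^sup>2)"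
      unfolding K_def using Mpos by (simp add: field_simps)
    have k3: "(norm aj)\<^sup>2 / (2 * M) = K * (norm aj)\<^sup>2" "(norm ai)\<^sup>2 / (2 * M) = K * (norm ai)\<^sup>2"
      unfolding K_def by simp_all
    show ?thesis unfolding k3 K_def[symmetric] using k1 k2 by linarith
  qed
  also have "\<dots> \<le> pv ti" unfolding pv_def ai_def[symmetric] using h by simp
  finally show ?thesis .
qed

lemma fi: "finite ((\<lambda>t. piece t z) ` S)" "(\<lambda>t. piece t z) ` S \<noteq> {}" using fin by auto

lemma phi_ge: "t \<in> S \<Longrightarrow> piece t z \<le> \<phi> z"
  unfolding \<phi>_def using fi by (intro Max_ge) auto

lemma phi_at: "ti \<in> S \<Longrightarrow> \<phi> (zz ti) = pv ti"
proof -
  assume ti: "ti \<in> S"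
  have "piece ti (zz ti) = pv ti" unfolding piece_def by simp
  hence "pv ti \<le> \<phi> (zz ti)" using phi_ge[OF ti, of "zz ti"] by simp
  moreover have "\<phi> (zz ti) \<le> pv ti" unfolding \<phi>_def using fi piece_le[OF ti] by (simp add: Max_le_iff)
  ultimately show ?thesis by simp
qed

lemma piece_aff: "piece s ((1 - t) *\<^sub>R x + t *\<^sub>R y) = (1 - t) * piece s x + t * piece s y"
  unfolding piece_def by (simp add: inner_add_right inner_diff_right algebra_simps)

lemma phi_conv: "convex (epigraph (\<lambda>z. ereal (\<phi> z)))"
  by (rule conv_epi_real) (unfold \<phi>_def, rule max_aff_conv[OF fin piece_aff])

lemma phi_closed: "closed (epigraph (\<lambda>z. ereal (\<phi> z)))"
proof -
  have "closed (epigraph (\<lambda>z. ereal (Max ((\<lambda>t. piece t z) ` S) + 0)))"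
    by (rule max_closed[OF fin]) (auto simp: piece_def intro!: continuous_intros)
  thus ?thesis unfolding \<phi>_def by simp
qed

definition "prox x = (SOME p. \<forall>z. \<Psi> x p \<le> \<Psi> x z)"
definition "Hc x = \<Psi> x (prox x)"
definition "A x = M *\<^sub>R (x - prox x)"

lemma prox_ex: "\<exists>p. \<forall>z. \<Psi> x p \<le> \<Psi> x z"
proof -
  obtain t0 where t0: "t0 \<in> S" using fin by auto
  have aff: "ereal ((pv t0 - inner (av t0) (zz t0)) + inner (av t0) z) \<le> ereal (\<phi> z)" for z
    using phi_ge[OF t0, of z] unfolding piece_def by (simp add: inner_diff_right)
  obtain m vm where fm: "ereal (\<phi> m) = ereal vm"
    and mn: "\<forall>z. ereal (\<phi> m) + ereal (M / 2 * (norm (x - m))\<^sup>2) \<le> ereal (\<phi> z) + ereal (M / 2 * (norm (x - z))\<^sup>2)"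
    using min_exists[OF phi_closed, of x "\<phi> x", OF refl aff Mpos, of x] by blast
  have "\<forall>z. \<Psi> x m \<le> \<Psi> x z" using mn unfolding \<Psi>_def by simp
  thus ?thesis by blast
qed

lemma prox_min: "\<Psi> x (prox x) \<le> \<Psi> x z"
proof -
  have "\<forall>z. \<Psi> x (prox x) \<le> \<Psi> x z" unfolding prox_def by (rule someI_ex[OF prox_ex])
  thus ?thesis by blast
qed

lemma prox_sub: "\<phi> (prox x) + inner (A x) (z - prox x) \<le> \<phi> z"
proof -
  have "M *\<^sub>R (x - prox x) \<in> subdiff (\<lambda>z. ereal (\<phi> z)) (prox x)"
    by (rule min_sub[OF phi_conv refl]) (use prox_min in \<open>simp add: \<Psi>_def\<close>)
  thus ?thesis unfolding subdiff_def A_def by simp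
qed

lemma E1: "Hc x + M / 2 * (norm (z - prox x))\<^sup>2 \<le> \<Psi> x z"
proof -
  define p where "p = prox x"
  have s: "\<phi> p + inner (M *\<^sub>R (x - p)) (z - p) \<le> \<phi> z" using prox_sub[of x z] unfolding p_def A_def .
  have "x - z = (x - p) - (z - p)" by simp
  hence "(norm (x - z))\<^sup>2 = (norm (x - p))\<^sup>2 - 2 * inner (x - p) (z - p) + (norm (z - p))\<^sup>2"
    by (metis normsq_expand(2))
  hence "M / 2 * (norm (x - z))\<^sup>2 = M / 2 * (norm (x - p))\<^sup>2 - M * inner (x - p) (z - p) + M / 2 * (norm (z - p))\<^sup>2"
    by (simp only:) (simp add: algebra_simps)
  moreover have "\<phi> p + M * inner (x - p) (z - p) \<le> \<phi> z" using s by simp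
  ultimately show ?thesis unfolding Hc_def \<Psi>_def p_def[symmetric] by linarith
qed

lemma E2: "Hc y \<le> Hc x + inner (A x) (y - x) + M / 2 * (norm (y - x))\<^sup>2"
proof -
  define p where "p = prox x"
  have "Hc y \<le> \<Psi> y p" unfolding Hc_def by (rule prox_min)
  moreover have "y - p = (x - p) + (y - x)" by simp
  hence "(norm (y - p))\<^sup>2 = (norm (x - p))\<^sup>2 + 2 * inner (x - p) (y - x) + (norm (y - x))\<^sup>2"
    by (metis normsq_expand(1))
  hence "M / 2 * (norm (y - p))\<^sup>2 = M / 2 * (norm (x - p))\<^sup>2 + M * inner (x - p) (y - x) + M / 2 * (norm (y - x))\<^sup>2"
    by (simp only:) (simp add: algebra_simps)
  ultimately show ?thesis unfolding Hc_def \<Psi>_def A_def p_def[symmetric] by (simp; linarith)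
qed

lemma E3: "Hc x + inner (A x) (y - x) + 1 / (2 * M) * (norm (A y - A x))\<^sup>2 \<le> Hc y"
proof -
  define P Q where "P = prox x" and "Q = prox y"
  have e1: "Hc x + M / 2 * (norm (Q - P))\<^sup>2 \<le> \<phi> Q + M / 2 * (norm (x - Q))\<^sup>2"
    using E1[of x Q] unfolding \<Psi>_def P_def .
  have hy: "Hc y = \<phi> Q + M / 2 * (norm (y - Q))\<^sup>2" unfolding Hc_def \<Psi>_def Q_def ..
  define a b c where "a = y - x" and "b = x - Q" and "c = Q - P"
  have yq: "y - Q = a + b" and xq: "x - Q = b" and qp: "Q - P = c" and xp: "x - P = b + c"
    and aa: "A y - A x = M *\<^sub>R (a - c)"
    unfolding a_def b_def c_def A_def P_def[symmetric] Q_def[symmetric] by (simp_all add: algebra_simps)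
  have n1: "(norm (a + b))\<^sup>2 = (norm a)\<^sup>2 + 2 * inner a b + (norm b)\<^sup>2" by (rule normsq_expand(1))
  have n2: "(norm (a - c))\<^sup>2 = (norm a)\<^sup>2 - 2 * inner a c + (norm c)\<^sup>2" by (rule normsq_expand(2))
  have n3: "1 / (2 * M) * (norm (M *\<^sub>R (a - c)))\<^sup>2 = M / 2 * (norm (a - c))\<^sup>2"
  proof -
    have "norm (M *\<^sub>R (a - c)) = M * norm (a - c)" using Mpos by simp
    thus ?thesis using Mpos by (simp add: power_mult_distrib power2_eq_square field_simps)
  qed
  have i: "inner (A x) (y - x) = M * inner b a + M * inner c a"
    unfolding A_def P_def[symmetric] xp a_def[symmetric] by (simp add: inner_add_left distrib_left)
  have "Hc x + inner (A x) (y - x) + 1 / (2 * M) * (norm (A y - A x))\<^sup>2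
      = Hc x + M / 2 * ((norm c)\<^sup>2 + (norm (a + b))\<^sup>2 - (norm b)\<^sup>2)"
    unfolding aa n3 i n1 n2 by (simp add: inner_commute algebra_simps)
  also have "\<dots> \<le> Hc y" using e1 unfolding hy qp xq yq by (simp add: algebra_simps)
  finally show ?thesis .
qed

end

lemma uniq_grad:
  fixes F :: "'a::real_inner \<Rightarrow> real"
  assumes K: "K > 0" and up: "\<And>y. F y \<le> F x + inner s (y - x) + K * (norm (y - x))\<^sup>2"
    and lo: "\<And>y. F x + inner g (y - x) \<le> F y"
  shows "g = s"
proof -
  define y where "y = x + (1 / (2 * K)) *\<^sub>R (g - s)"
  have yx: "y - x = (1 / (2 * K)) *\<^sub>R (g - s)" unfolding y_def by simp
  have "inner g (y - x) \<le> inner s (y - x) + K * (norm (y - x))\<^sup>2" using up[of y] lo[of y] by simp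
  hence "inner (g - s) (y - x) \<le> K * (norm (y - x))\<^sup>2" by (simp add: inner_diff_left)
  hence "(norm (g - s))\<^sup>2 / (2 * K) \<le> K * ((norm (g - s))\<^sup>2 / (2 * K)\<^sup>2)"
    unfolding yx using K by (simp add: power2_norm_eq_inner power_mult_distrib power_divide)
  hence "(norm (g - s))\<^sup>2 / (2 * K) \<le> (norm (g - s))\<^sup>2 / (4 * K)"
    using K by (simp add: power2_eq_square field_simps)
  hence "(norm (g - s))\<^sup>2 \<le> 0" using K by (simp add: field_simps)
  thus ?thesis by simp
qed

context suffs begin

lemma Hc_lower: "Hc x + inner (A x) (y - x) \<le> Hc y"
  using E3[of x y] Mpos by (smt (verit) divide_nonneg_pos mult_nonneg_nonneg zero_le_power2)

lemma Hc_cont: "continuous_on UNIV Hc"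
proof -
  have "isCont Hc x" for x
  proof -
    have c1: "isCont (\<lambda>y. Hc x + inner (A x) (y - x)) x" by (intro continuous_intros)
    have c2: "isCont (\<lambda>y. Hc x + inner (A x) (y - x) + M / 2 * (norm (y - x))\<^sup>2) x" by (intro continuous_intros)
    have l1: "((\<lambda>y. Hc x + inner (A x) (y - x)) \<longlongrightarrow> Hc x) (at x)" using c1 by (simp add: isCont_def)
    have l2: "((\<lambda>y. Hc x + inner (A x) (y - x) + M / 2 * (norm (y - x))\<^sup>2) \<longlongrightarrow> Hc x) (at x)"
      using c2 by (simp add: isCont_def)
    have ev1: "eventually (\<lambda>y. Hc x + inner (A x) (y - x) \<le> Hc y) (at x)"
      by (rule always_eventually) (intro allI Hc_lower)
    have ev2: "eventually (\<lambda>y. Hc y \<le> Hc x + inner (A x) (y - x) + M / 2 * (norm (y - x))\<^sup>2) (at x)"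
      by (rule always_eventually) (intro allI E2)
    have "(Hc \<longlongrightarrow> Hc x) (at x)"
      by (rule tendsto_sandwich[OF ev1 ev2 l1 l2])
    thus ?thesis by (simp add: isCont_def)
  qed
  thus ?thesis by (simp add: continuous_on_eq_continuous_at)
qed

definition "G z = Hc z + \<mu> / 2 * (norm z)\<^sup>2"
definition "sg z = A z + \<mu> *\<^sub>R z"

lemma quad_id: "\<mu> / 2 * (norm y)\<^sup>2 = \<mu> / 2 * (norm x)\<^sup>2 + \<mu> * inner x (y - x) + \<mu> / 2 * (norm (y - x))\<^sup>2"
proof -
  have "y = x + (y - x)" by simp
  hence "(norm y)\<^sup>2 = (norm x)\<^sup>2 + 2 * inner x (y - x) + (norm (y - x))\<^sup>2" by (metis normsq_expand(1))
  thus ?thesis by (simp only:) (simp add: algebra_simps)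
qed

lemma G_sub: "G x + inner (sg x) (y - x) \<le> G y"
proof -
  have "0 \<le> \<mu> / 2 * (norm (y - x))\<^sup>2" using mu0 by simp
  moreover have "inner (sg x) (y - x) = inner (A x) (y - x) + \<mu> * inner x (y - x)"
    unfolding sg_def by (simp add: inner_add_left)
  ultimately show ?thesis using Hc_lower[of x y] quad_id[of y x] unfolding G_def by linarith
qed

lemma G_up: "G y \<le> G x + inner (sg x) (y - x) + L' / 2 * (norm (y - x))\<^sup>2"
proof -
  have "inner (sg x) (y - x) = inner (A x) (y - x) + \<mu> * inner x (y - x)"
    unfolding sg_def by (simp add: inner_add_left)
  moreover have "L' / 2 * (norm (y - x))\<^sup>2 = M / 2 * (norm (y - x))\<^sup>2 + \<mu> / 2 * (norm (y - x))\<^sup>2"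
    unfolding M_def by (simp add: field_simps)
  ultimately show ?thesis using E2[of y x] quad_id[of y x] unfolding G_def by linarith
qed

lemma sub_G: "g \<in> subdiff (\<lambda>z. ereal (G z)) x \<longleftrightarrow> (\<forall>y. G x + inner g (y - x) \<le> G y)"
  unfolding subdiff_def by simp

lemma uniqG: "g \<in> subdiff (\<lambda>z. ereal (G z)) x \<Longrightarrow> g = sg x"
proof -
  assume "g \<in> subdiff (\<lambda>z. ereal (G z)) x"
  hence lo: "\<And>y. G x + inner g (y - x) \<le> G y" using sub_G by blast
  have K: "L' / 2 > 0" using mu0 muL by simp
  show ?thesis by (rule uniq_grad[OF K G_up lo])
qed

lemma lipG: "norm (sg x - sg y) \<le> L' * norm (x - y)"
proof -
  define dA where "dA = A x - A y"
  define dx where "dx = x - y"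
  define c where "c = inner dA dx"
  define K where "K = 1 / (2 * M)"
  define N where "N = (norm dA)\<^sup>2"
  have e1: "Hc y + inner (A y) (x - y) + K * N \<le> Hc x" using E3[of y x] unfolding K_def N_def dA_def .
  have "norm (A y - A x) = norm (A x - A y)" by (rule norm_minus_commute)
  hence e2: "Hc x + inner (A x) (y - x) + K * N \<le> Hc y" using E3[of x y] unfolding K_def N_def dA_def by simp
  have "inner (A y) (x - y) + inner (A x) (y - x) = - c"
    unfolding c_def dA_def dx_def by (simp add: inner_diff_left inner_diff_right inner_commute)
  hence "K * N + K * N \<le> c" using e1 e2 by linarith
  moreover have "K * N + K * N = N / M" unfolding K_def by (simp add: field_simps)
  ultimately have "N / M \<le> c" by simp
  hence co: "N \<le> M * c" using Mpos by (simp add: pos_divide_le_eq mult.commute)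
  have cs: "c \<le> norm dA * norm dx" unfolding c_def by (rule norm_cauchy_schwarz)
  have nA: "norm dA \<le> M * norm dx"
  proof (cases "norm dA = 0")
    case True thus ?thesis using Mpos by simp
  next
    case False
    have "M * c \<le> M * (norm dA * norm dx)" using cs Mpos by (intro mult_left_mono) auto
    hence "norm dA * norm dA \<le> norm dA * (M * norm dx)" using co unfolding N_def power2_eq_square
      by (simp add: algebra_simps)
    moreover have "norm dA > 0" using False by simp
    ultimately show ?thesis by (simp add: mult_le_cancel_left_pos)
  qed
  have "norm dA * norm dx \<le> M * norm dx * norm dx" using nA by (intro mult_right_mono) auto
  hence cM: "c \<le> M * (norm dx)\<^sup>2" using cs by (simp add: power2_eq_square mult.assoc)
  have s: "sg x - sg y = dA + \<mu> *\<^sub>R dx" unfolding sg_def dA_def dx_def by (simp add: algebra_simps)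
  have n2: "(norm (\<mu> *\<^sub>R dx))\<^sup>2 = \<mu>\<^sup>2 * (norm dx)\<^sup>2" by (simp add: power_mult_distrib)
  have i2: "inner dA (\<mu> *\<^sub>R dx) = \<mu> * c" unfolding c_def by simp
  have "(norm (sg x - sg y))\<^sup>2 = N + 2 * (\<mu> * c) + \<mu>\<^sup>2 * (norm dx)\<^sup>2"
    unfolding s normsq_expand(1) n2 i2 N_def ..
  also have "\<dots> \<le> M * c + 2 * (\<mu> * c) + \<mu>\<^sup>2 * (norm dx)\<^sup>2" using co by simp
  also have "\<dots> = (M + 2 * \<mu>) * c + \<mu>\<^sup>2 * (norm dx)\<^sup>2" by (simp add: distrib_right)
  also have "\<dots> \<le> (M + 2 * \<mu>) * (M * (norm dx)\<^sup>2) + \<mu>\<^sup>2 * (norm dx)\<^sup>2"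
    using cM Mpos mu0 by (intro add_right_mono mult_left_mono) auto
  also have "\<dots> = (L' * norm dx)\<^sup>2"
  proof -
    have gen: "\<And>m u n::real. (m + 2 * u) * (m * n\<^sup>2) + u\<^sup>2 * n\<^sup>2 = ((m + u) * n)\<^sup>2"
      by (simp add: power2_eq_square algebra_simps)
    have L': "M + \<mu> = L'" unfolding M_def by simp
    show ?thesis using gen[of M \<mu> "norm dx"] unfolding L' .
  qed
  finally have "(norm (sg x - sg y))\<^sup>2 \<le> (L' * norm dx)\<^sup>2" .
  hence "norm (sg x - sg y) \<le> L' * norm dx"
    by (rule power2_le_imp_le) (use mu0 muL in simp)
  thus ?thesis unfolding dx_def .
qed

lemma interp:
  assumes ti: "(xi, gi, vi) \<in> S"
  shows "G xi = vi \<and> sg xi = gi"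
proof -
  define t where "t = (xi, gi, vi)"
  define a where "a = av t"
  have tS: "t \<in> S" using ti t_def by simp
  have zzt: "zz t = xi - (1 / M) *\<^sub>R a" unfolding zz_def a_def t_def by simp
  have low: "hv t + M / 2 * (norm (z - zz t))\<^sup>2 \<le> \<Psi> xi z" for z
  proof -
    define w where "w = z - zz t"
    have "xi - z = (1 / M) *\<^sub>R a - w" unfolding w_def zzt by simp
    hence "(norm (xi - z))\<^sup>2 = (norm ((1 / M) *\<^sub>R a))\<^sup>2 - 2 * inner ((1 / M) *\<^sub>R a) w + (norm w)\<^sup>2"
      by (metis normsq_expand(2))
    hence n: "M / 2 * (norm (xi - z))\<^sup>2 = (norm a)\<^sup>2 / (2 * M) - inner a w + M / 2 * (norm w)\<^sup>2"
      using Mpos by (simp add: power_mult_distrib power2_eq_square field_simps)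
    have "piece t z \<le> \<phi> z" by (rule phi_ge[OF tS])
    moreover have "piece t z = hv t - (norm a)\<^sup>2 / (2 * M) + inner a w" unfolding piece_def pv_def w_def a_def ..
    ultimately show ?thesis unfolding \<Psi>_def n w_def[symmetric] by linarith
  qed
  have at: "\<Psi> xi (zz t) = hv t"
  proof -
    have "xi - zz t = (1 / M) *\<^sub>R a" unfolding zzt by simp
    hence "M / 2 * (norm (xi - zz t))\<^sup>2 = (norm a)\<^sup>2 / (2 * M)"
      using Mpos by (simp add: power_mult_distrib power2_eq_square field_simps)
    thus ?thesis unfolding \<Psi>_def phi_at[OF tS] pv_def a_def by simp
  qed
  have h1: "Hc xi \<le> hv t" unfolding Hc_def using prox_min[of xi "zz t"] at by simp
  have h2: "hv t + M / 2 * (norm (prox xi - zz t))\<^sup>2 \<le> Hc xi" unfolding Hc_def by (rule low)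
  have "M / 2 * (norm (prox xi - zz t))\<^sup>2 \<le> 0" using h1 h2 by simp
  hence n0: "norm (prox xi - zz t) = 0" using Mpos
    by (smt (verit) divide_pos_pos mult_pos_pos zero_less_power2 norm_ge_zero)
  hence p: "prox xi = zz t" by simp
  have "M / 2 * (norm (prox xi - zz t))\<^sup>2 = 0" by (simp only: n0) simp
  hence HA: "Hc xi = hv t" using h1 h2 by linarith
  have AA: "A xi = a" unfolding A_def p zzt using Mpos by simp
  show ?thesis unfolding G_def sg_def HA AA a_def using t_def by (simp add: hv_def av_def)
qed

lemma suff_fin: "interpolable \<mu> (ereal L') S"
proof -
  define f where "f z = ereal (G z)" for z
  have cG: "continuous_on UNIV G" unfolding G_def by (intro continuous_intros Hc_cont)
  have cl: "closed (epigraph f)"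
  proof -
    have "epigraph f = {p. G (fst p) \<le> snd p}" by (auto simp: epigraph_def f_def)
    moreover have "continuous_on UNIV (\<lambda>p::'a \<times> real. G (fst p))"
      by (rule continuous_on_compose2[OF cG continuous_on_fst[OF continuous_on_id]]) auto
    hence "closed {p::'a \<times> real. G (fst p) \<le> snd p}"
      by (rule closed_Collect_le) (intro continuous_intros)
    ultimately show ?thesis by simp
  qed
  have cv: "convex (epigraph f)" unfolding f_def
    by (rule conv_epi_real) (rule sub_conv[OF G_sub])
  have e: "(\<lambda>x. f x - ereal (\<mu> / 2 * (norm x)\<^sup>2)) = (\<lambda>x. ereal (Hc x))" unfolding f_def G_def by simp
  have cv2: "convex (epigraph (\<lambda>x. f x - ereal (\<mu> / 2 * (norm x)\<^sup>2)))" unfolding e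
    by (rule conv_epi_real) (rule sub_conv[OF Hc_lower])
  have lip: "inv_L (ereal L') * norm (g1 - g2) \<le> norm (x1 - x2)"
    if "g1 \<in> subdiff f x1" "g2 \<in> subdiff f x2" for x1 x2 g1 g2
  proof -
    have "g1 = sg x1" "g2 = sg x2" using uniqG that unfolding f_def by auto
    hence "norm (g1 - g2) \<le> L' * norm (x1 - x2)" using lipG by simp
    moreover have "L' > 0" using mu0 muL by simp
    ultimately show ?thesis by (simp add: inv_L_def field_simps)
  qed
  have fF: "f \<in> FmuL \<mu> (ereal L')" unfolding FmuL_def using cl cv cv2 lip by (simp add: f_def)
  have "\<forall>(x, g, v)\<in>S. f x = ereal v \<and> g \<in> subdiff f x"
  proof (clarify)
    fix x g v assume t: "(x, g, v) \<in> S"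
    from interp[OF t] have "G x = v" "sg x = g" by auto
    thus "f x = ereal v \<and> g \<in> subdiff f x" unfolding f_def using G_sub sub_G by auto
  qed
  thus ?thesis unfolding interpolable_def using fF by blast
qed

end

lemma qf_split:
  fixes G :: "nat \<Rightarrow> nat \<Rightarrow> real"
  assumes sym: "\<forall>p<Suc n. \<forall>q<Suc n. G p q = G q p"
  shows "(\<Sum>p<Suc n. \<Sum>q<Suc n. w p * G p q * w q) =
    (\<Sum>p<n. \<Sum>q<n. w p * G p q * w q) + 2 * w n * (\<Sum>p<n. w p * G p n) + w n * G n n * w n"
proof -
  have A: "(\<Sum>p<n. w p * G p n * w n) = w n * (\<Sum>p<n. w p * G p n)"
    by (simp add: sum_distrib_left algebra_simps)
  have B: "(\<Sum>q<n. w n * G n q * w q) = w n * (\<Sum>p<n. w p * G p n)"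
    unfolding sum_distrib_left by (rule sum.cong) (use sym in auto)
  show ?thesis by (simp add: sum.distrib A B)
qed

lemma psd_offdiag_zero:
  fixes G :: "nat \<Rightarrow> nat \<Rightarrow> real"
  assumes sym: "\<forall>p<Suc n. \<forall>q<Suc n. G p q = G q p"
    and psd: "\<forall>v. 0 \<le> (\<Sum>p<Suc n. \<Sum>q<Suc n. v p * G p q * v q)"
    and a0: "G n n = 0" and p: "p < n"
  shows "G p n = 0"
proof (rule ccontr)
  assume b: "G p n \<noteq> 0"
  define c where "c = G p p"
  define b' where "b' = G p n"
  have qf: "(\<Sum>p<Suc n. \<Sum>q<Suc n. w p * G p q * w q) = w p * c * w p + 2 * w n * w p * b'"
    if "\<And>k. k < n \<Longrightarrow> k \<noteq> p \<Longrightarrow> w k = 0" for w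
  proof -
    have "(\<Sum>pp<n. \<Sum>q<n. w pp * G pp q * w q) = (\<Sum>pp<n. if pp = p then w p * c * w p else 0)"
    proof (rule sum.cong[OF refl])
      fix pp assume pp: "pp \<in> {..<n}"
      show "(\<Sum>q<n. w pp * G pp q * w q) = (if pp = p then w p * c * w p else 0)"
      proof (cases "pp = p")
        case True
        have "(\<Sum>q<n. w pp * G pp q * w q) = (\<Sum>q<n. if q = p then w p * c * w p else 0)"
          by (rule sum.cong[OF refl]) (use that True c_def in auto)
        thus ?thesis using True p by simp
      next
        case False thus ?thesis using that pp by simp
      qed
    qed
    also have "\<dots> = w p * c * w p" using p by simp
    finally have s1: "(\<Sum>pp<n. \<Sum>q<n. w pp * G pp q * w q) = w p * c * w p" .
    have "(\<Sum>pp<n. w pp * G pp n) = (\<Sum>pp<n. if pp = p then w p * b' else 0)"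
      by (rule sum.cong[OF refl]) (use that b'_def in auto)
    also have "\<dots> = w p * b'" using p by simp
    finally have s2: "(\<Sum>pp<n. w pp * G pp n) = w p * b'" .
    show ?thesis unfolding qf_split[OF sym] s1 s2 a0 by simp
  qed
  have c0: "c \<ge> 0"
  proof -
    define w where "w = (\<lambda>k. if k = p then (1::real) else 0)"
    have "0 \<le> (\<Sum>p<Suc n. \<Sum>q<Suc n. w p * G p q * w q)" using psd by blast
    also have "\<dots> = c" using qf[of w] p unfolding w_def by auto
    finally show ?thesis .
  qed
  define \<epsilon> where "\<epsilon> = 1 / (c + 1)"
  have ep: "\<epsilon> > 0" "\<epsilon> * c < 1" unfolding \<epsilon>_def using c0 by (auto simp: field_simps)
  define t where "t = - \<epsilon> * b'"
  define w where "w = (\<lambda>k. if k = p then t else if k = n then (1::real) else 0)"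
  have "0 \<le> (\<Sum>p<Suc n. \<Sum>q<Suc n. w p * G p q * w q)" using psd by blast
  also have "\<dots> = t * c * t + 2 * t * b'" using qf[of w] p unfolding w_def by auto
  also have "\<dots> = \<epsilon> * b'\<^sup>2 * (\<epsilon> * c - 2)"
    unfolding t_def by (simp add: power2_eq_square algebra_simps)
  also have "\<dots> < 0"
  proof -
    have "b'\<^sup>2 > 0" using b b'_def by simp
    hence "\<epsilon> * b'\<^sup>2 > 0" using ep by simp
    moreover have "\<epsilon> * c - 2 < 0" using ep by simp
    ultimately show ?thesis by (simp add: mult_pos_neg)
  qed
  finally show False by simp
qed

lemma chol:
  fixes G :: "nat \<Rightarrow> nat \<Rightarrow> real"
  assumes "\<forall>p<n. \<forall>q<n. G p q = G q p" and "\<forall>v. 0 \<le> (\<Sum>p<n. \<Sum>q<n. v p * G p q * v q)"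
  shows "\<exists>Lm. \<forall>p<n. \<forall>q<n. G p q = (\<Sum>k<n. Lm p k * Lm q k)"
  using assms
proof (induction n arbitrary: G)
  case 0 thus ?case by simp
next
  case (Suc n)
  note sym = Suc.prems(1) and psd = Suc.prems(2)
  define a where "a = G n n"
  have a0: "a \<ge> 0"
  proof -
    define w where "w = (\<lambda>k. if k = n then (1::real) else 0)"
    have "0 \<le> (\<Sum>p<Suc n. \<Sum>q<Suc n. w p * G p q * w q)" using psd by blast
    also have "\<dots> = a" unfolding qf_split[OF sym] a_def w_def by simp
    finally show ?thesis .
  qed
  have z: "a = 0 \<Longrightarrow> p < n \<Longrightarrow> G p n = 0" for p
    using psd_offdiag_zero[OF sym psd, of p] unfolding a_def by simp
  define G' where "G' p q = G p q - G p n * G q n / a" for p q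
  have sym': "\<forall>p<n. \<forall>q<n. G' p q = G' q p" using sym unfolding G'_def by (auto simp: mult.commute)
  have psd': "\<forall>v. 0 \<le> (\<Sum>p<n. \<Sum>q<n. v p * G' p q * v q)"
  proof
    fix v :: "nat \<Rightarrow> real"
    define s where "s = (\<Sum>p<n. v p * G p n)"
    have e: "(\<Sum>p<n. \<Sum>q<n. v p * G' p q * v q) = (\<Sum>p<n. \<Sum>q<n. v p * G p q * v q) - s * s / a"
    proof -
      have "(\<Sum>p<n. \<Sum>q<n. v p * G' p q * v q) =
          (\<Sum>p<n. \<Sum>q<n. v p * G p q * v q - (v p * G p n) * (v q * G q n) / a)"
        unfolding G'_def by (rule sum.cong[OF refl], rule sum.cong[OF refl]) (simp add: field_simps)
      also have "\<dots> = (\<Sum>p<n. \<Sum>q<n. v p * G p q * v q) - (\<Sum>p<n. \<Sum>q<n. (v p * G p n) * (v q * G q n) / a)"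
        by (simp add: sum_subtractf)
      also have "(\<Sum>p<n. \<Sum>q<n. (v p * G p n) * (v q * G q n) / a) = s * s / a"
      proof -
        have "(\<Sum>p<n. \<Sum>q<n. (v p * G p n) * (v q * G q n) / a) = (\<Sum>p<n. \<Sum>q<n. (v p * G p n) * (v q * G q n)) / a"
          by (simp add: sum_divide_distrib)
        moreover have "(\<Sum>p<n. \<Sum>q<n. (v p * G p n) * (v q * G q n)) = s * s" unfolding s_def sum_product ..
        ultimately show ?thesis by simp
      qed
      finally show ?thesis .
    qed
    show "0 \<le> (\<Sum>p<n. \<Sum>q<n. v p * G' p q * v q)"
    proof (cases "a = 0")
      case True
      have "s = 0" unfolding s_def using z[OF True] by simp
      define w where "w = v(n := 0)"
      have "0 \<le> (\<Sum>p<Suc n. \<Sum>q<Suc n. w p * G p q * w q)" using psd by blast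
      also have "\<dots> = (\<Sum>p<n. \<Sum>q<n. v p * G p q * v q)"
        unfolding qf_split[OF sym] w_def by simp
      finally show ?thesis unfolding e using \<open>s = 0\<close> by simp
    next
      case False
      hence apos: "a > 0" using a0 by simp
      define w where "w = v(n := - s / a)"
      have "0 \<le> (\<Sum>p<Suc n. \<Sum>q<Suc n. w p * G p q * w q)" using psd by blast
      also have "\<dots> = (\<Sum>p<n. \<Sum>q<n. v p * G p q * v q) + 2 * (- s / a) * s + (- s / a) * a * (- s / a)"
        unfolding qf_split[OF sym] w_def a_def[symmetric] s_def by simp
      also have "\<dots> = (\<Sum>p<n. \<Sum>q<n. v p * G p q * v q) - s * s / a"
        using apos by (simp add: field_simps)
      finally show ?thesis unfolding e .
    qed
  qed
  obtain L' where L': "\<forall>p<n. \<forall>q<n. G' p q = (\<Sum>k<n. L' p k * L' q k)"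
    using Suc.IH[OF sym' psd'] by blast
  define Lm where "Lm p k = (if k < n then (if p < n then L' p k else 0) else G p n / sqrt a)" for p k
  have "G p q = (\<Sum>k<Suc n. Lm p k * Lm q k)" if p: "p < Suc n" and q: "q < Suc n" for p q
  proof -
    have last: "Lm p n * Lm q n = G p n * G q n / a"
      unfolding Lm_def using a0 by (simp add: real_sqrt_mult[symmetric] power2_eq_square[symmetric])
    have "(\<Sum>k<Suc n. Lm p k * Lm q k) = (\<Sum>k<n. Lm p k * Lm q k) + G p n * G q n / a"
      using last by simp
    moreover have "(\<Sum>k<n. Lm p k * Lm q k) = (if p < n \<and> q < n then G' p q else 0)"
    proof (cases "p < n \<and> q < n")
      case True thus ?thesis using L' unfolding Lm_def by simp
    next
      case False thus ?thesis unfolding Lm_def by auto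
    qed
    moreover have "G p q = (if p < n \<and> q < n then G' p q else 0) + G p n * G q n / a"
    proof (cases "p < n \<and> q < n")
      case True thus ?thesis unfolding G'_def by simp
    next
      case False
      hence pq: "p = n \<or> q = n" using p q by auto
      show ?thesis
      proof (cases "a = 0")
        case True
        have "G p n = 0" using z[OF True] a_def True p by (cases "p = n") auto
        moreover have "G q n = 0" using z[OF True] a_def True q by (cases "q = n") auto
        moreover have "G p q = 0"
          using pq \<open>G p n = 0\<close> \<open>G q n = 0\<close> sym p q by auto
        ultimately show ?thesis using False by auto
      next
        case ne: False
        show ?thesis
        proof (cases "p = n")
          case True
          have "G q n = G n q" using sym q by auto
          thus ?thesis using True False ne unfolding a_def by simp
        next
          case pn: False
          hence "q = n" using pq by simp
          thus ?thesis using False ne unfolding a_def by simp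
        qed
      qed
    qed
    ultimately show ?thesis by simp
  qed
  thus ?case by blast
qed

lemma emb:
  assumes "n \<le> DIM('a::euclidean_space)"
  shows "\<exists>e :: nat \<Rightarrow> 'a. \<forall>k<n. \<forall>l<n. inner (e k) (e l) = (if k = l then 1 else 0)"
proof -
  have "card {..<n} \<le> card (Basis :: 'a set)" using assms by simp
  then obtain f :: "nat \<Rightarrow> 'a" where f: "f ` {..<n} \<subseteq> Basis" "inj_on f {..<n}"
    using card_le_inj[of "{..<n}" "Basis :: 'a set"] by auto
  have "inner (f k) (f l) = (if k = l then 1 else 0)" if "k < n" "l < n" for k l
  proof -
    have "f k \<in> Basis" "f l \<in> Basis" using f(1) that by auto
    hence "inner (f k) (f l) = (if f k = f l then 1 else 0)" by (rule inner_Basis)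
    moreover have "f k = f l \<longleftrightarrow> k = l" using f(2) that by (auto dest: inj_onD)
    ultimately show ?thesis by simp
  qed
  thus ?thesis by blast
qed

lemma factor:
  fixes G :: "nat \<Rightarrow> nat \<Rightarrow> real"
  assumes "\<forall>p<n. \<forall>q<n. G p q = G q p" and "\<forall>v. 0 \<le> (\<Sum>p<n. \<Sum>q<n. v p * G p q * v q)"
    and "n \<le> DIM('a::euclidean_space)"
  shows "\<exists>P :: nat \<Rightarrow> 'a. \<forall>p<n. \<forall>q<n. G p q = inner (P p) (P q)"
proof -
  obtain Lm where Lm: "\<forall>p<n. \<forall>q<n. G p q = (\<Sum>k<n. Lm p k * Lm q k)" using chol[OF assms(1,2)] by blast
  obtain e :: "nat \<Rightarrow> 'a" where e: "\<forall>k<n. \<forall>l<n. inner (e k) (e l) = (if k = l then 1 else 0)"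
    using emb[OF assms(3)] by blast
  define P where "P p = (\<Sum>k<n. Lm p k *\<^sub>R e k)" for p
  have "inner (P p) (P q) = (\<Sum>k<n. Lm p k * Lm q k)" for p q
  proof -
    have "inner (P p) (P q) = (\<Sum>k<n. Lm p k * inner (e k) (P q))"
      unfolding P_def[of p] by (simp add: inner_sum_left)
    also have "\<dots> = (\<Sum>k<n. \<Sum>l<n. Lm p k * Lm q l * inner (e k) (e l))"
      unfolding P_def by (simp add: inner_sum_right sum_distrib_left mult.assoc)
    also have "\<dots> = (\<Sum>k<n. \<Sum>l<n. if l = k then Lm p k * Lm q k else 0)"
      by (rule sum.cong[OF refl], rule sum.cong[OF refl]) (use e in auto)
    also have "\<dots> = (\<Sum>k<n. Lm p k * Lm q k)" by simp
    finally show ?thesis .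
  qed
  hence "\<forall>p<n. \<forall>q<n. G p q = inner (P p) (P q)" using Lm by simp
  thus ?thesis by blast
qed

definition lin :: "nat \<Rightarrow> (nat \<Rightarrow> 'a::euclidean_space) \<Rightarrow> (nat \<Rightarrow> real) \<Rightarrow> 'a" where
  "lin N P c = (\<Sum>p\<le>N+1. c p *\<^sub>R P p)"

lemma T_bil: "(\<Sum>p\<le>N+1. \<Sum>q\<le>N+1. inner (P p) (P q) * (a q * b p)) = inner (lin N P b) (lin N P a)"
proof -
  have "inner (lin N P b) (lin N P a) = (\<Sum>p\<le>N+1. b p * inner (P p) (lin N P a))"
    unfolding lin_def[of N P b] by (simp only: inner_sum_left inner_scaleR_left)
  also have "\<dots> = (\<Sum>p\<le>N+1. \<Sum>q\<le>N+1. b p * (a q * inner (P p) (P q)))"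
    unfolding lin_def by (simp only: inner_sum_right inner_scaleR_right sum_distrib_left)
  also have "\<dots> = (\<Sum>p\<le>N+1. \<Sum>q\<le>N+1. inner (P p) (P q) * (a q * b p))"
    by (rule sum.cong[OF refl], rule sum.cong[OF refl]) (simp add: algebra_simps)
  finally show ?thesis by simp
qed

lemma lin_diff: "lin N P (\<lambda>p. a p - b p) = lin N P a - lin N P b"
  unfolding lin_def by (simp only: scaleR_diff_left sum_subtractf)

lemma trace_A:
  fixes P :: "nat \<Rightarrow> 'a::euclidean_space"
  shows "trace_prod N (\<lambda>p q. inner (P p) (P q)) (Amat \<mu> L h N i j) =
    coefL \<mu> L * inner (lin N P (uvec j)) (lin N P (hvec h N i) - lin N P (hvec h N j))
    + coef1 \<mu> L / 2 * (norm (lin N P (uvec i) - lin N P (uvec j)))\<^sup>2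
    + coefmu \<mu> L * inner (lin N P (uvec i)) (lin N P (hvec h N j) - lin N P (hvec h N i))
    + coefLmu \<mu> L / 2 * (norm (lin N P (hvec h N i) - lin N P (hvec h N j)))\<^sup>2"
proof -
  define X Y U V where "X = lin N P (hvec h N i)" and "Y = lin N P (hvec h N j)"
    and "U = lin N P (uvec i)" and "V = lin N P (uvec j)"
  define hi hj ui uj where "hi = hvec h N i" and "hj = hvec h N j" and "ui = uvec i" and "uj = uvec j"
  define dh du dh2 where "dh p = hi p - hj p" and "du p = ui p - uj p" and "dh2 p = hj p - hi p" for p
  define cL c1 cm cLm where "cL = coefL \<mu> L" and "c1 = coef1 \<mu> L" and "cm = coefmu \<mu> L" and "cLm = coefLmu \<mu> L"
  define Gp where "Gp p q = inner (P p) (P q)" for p q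
  define T where "T a b = (\<Sum>p\<le>N+1. \<Sum>q\<le>N+1. Gp p q * (a q * b p))" for a b
  have pt: "Gp p q * Amat \<mu> L h N i j q p =
      cL / 2 * (Gp p q * (uj q * dh p)) + cL / 2 * (Gp p q * (dh q * uj p))
      + c1 / 2 * (Gp p q * (du q * du p)) + cm / 2 * (Gp p q * (ui q * dh2 p))
      + cm / 2 * (Gp p q * (dh2 q * ui p)) + cLm / 2 * (Gp p q * (dh q * dh p))" for p q
    unfolding Amat_def Let_def hi_def[symmetric] hj_def[symmetric] ui_def[symmetric] uj_def[symmetric]
      dh_def du_def dh2_def cL_def[symmetric] c1_def[symmetric] cm_def[symmetric] cLm_def[symmetric]
    by (simp add: field_simps)
  have "trace_prod N (\<lambda>p q. inner (P p) (P q)) (Amat \<mu> L h N i j) =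
      (\<Sum>p\<le>N+1. \<Sum>q\<le>N+1. Gp p q * Amat \<mu> L h N i j q p)"
    unfolding trace_prod_def Gp_def ..
  also have "\<dots> = cL / 2 * T uj dh + cL / 2 * T dh uj + c1 / 2 * T du du + cm / 2 * T ui dh2
      + cm / 2 * T dh2 ui + cLm / 2 * T dh dh"
    unfolding pt T_def by (simp only: sum.distrib sum_distrib_left[symmetric])
  also have "\<dots> = cL * inner V (X - Y) + c1 / 2 * (norm (U - V))\<^sup>2 + cm * inner U (Y - X) + cLm / 2 * (norm (X - Y))\<^sup>2"
  proof -
    have Td: "T a b = inner (lin N P b) (lin N P a)" for a b unfolding T_def Gp_def by (rule T_bil)
    have l: "lin N P dh = X - Y" "lin N P du = U - V" "lin N P dh2 = Y - X"
      unfolding dh_def du_def dh2_def lin_diff X_def Y_def U_def V_def hi_def hj_def ui_def uj_def by simp_all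
    have l2: "lin N P uj = V" "lin N P ui = U" unfolding U_def V_def ui_def uj_def by simp_all
    show ?thesis unfolding Td l l2 by (simp add: inner_commute power2_norm_eq_inner field_simps)
  qed
  finally show ?thesis unfolding cL_def c1_def cm_def cLm_def X_def Y_def U_def V_def .
qed

lemma suff:
  fixes S :: "('a::euclidean_space \<times> 'a \<times> real) set"
  assumes fin: "finite S" "S \<noteq> {}" and mu0: "0 \<le> \<mu>" and muL: "ereal \<mu> < L"
    and Q: "\<And>ti tj. ti \<in> S \<Longrightarrow> tj \<in> S \<Longrightarrow> qc \<mu> L ti tj"
  shows "interpolable \<mu> L S"
proof (cases L)
  case (real L')
  interpret suffs S \<mu> L' by unfold_locales (use fin mu0 muL Q real in auto)
  show ?thesis using suff_fin real by simp
next
  case PInf thus ?thesis using suff_inf[OF fin mu0] Q by simp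
next
  case MInf thus ?thesis using muL by simp
qed

lemma lin_hvec:
  assumes "i \<le> N"
  shows "lin N P (hvec h N (Some i)) = P (N+1) - (\<Sum>k<i. h i k *\<^sub>R P k)"
proof -
  have "lin N P (hvec h N (Some i)) = (\<Sum>p\<le>N. hvec h N (Some i) p *\<^sub>R P p) + P (N+1)"
    unfolding lin_def by (simp add: hvec_def)
  also have "(\<Sum>p\<le>N. hvec h N (Some i) p *\<^sub>R P p) = (\<Sum>p\<le>N. if p < i then - (h i p *\<^sub>R P p) else 0)"
    by (rule sum.cong[OF refl]) (auto simp: hvec_def)
  also have "\<dots> = (\<Sum>p\<in>{p\<in>{..N}. p < i}. - (h i p *\<^sub>R P p))"
    by (rule sum.inter_filter[symmetric]) simp
  also have "{p\<in>{..N}. p < i} = {..<i}" using assms by auto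
  finally show ?thesis by (simp add: sum_negf)
qed

lemma lin_uvec:
  assumes "i \<le> N + 1"
  shows "lin N P (uvec (Some i)) = P i"
proof -
  have "lin N P (uvec (Some i)) = (\<Sum>p\<le>N+1. if p = i then P p else 0)"
    unfolding lin_def by (rule sum.cong[OF refl]) (simp add: uvec_def)
  thus ?thesis using assms by simp
qed

lemma lin_None: "lin N P (hvec h N None) = 0" "lin N P (uvec None) = 0"
  unfolding lin_def hvec_def uvec_def by simp_all

lemma trace_qc:
  fixes P :: "nat \<Rightarrow> 'a::euclidean_space"
  shows "qc \<mu> L (lin N P (hvec h N i), lin N P (uvec i), fopt fv i) (lin N P (hvec h N j), lin N P (uvec j), fopt fv j)
    \<longleftrightarrow> fopt fv j - fopt fv i + trace_prod N (\<lambda>p q. inner (P p) (P q)) (Amat \<mu> L h N i j) \<le> 0"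
  unfolding qc_def trace_A by simp

lemma quadform:
  fixes P :: "nat \<Rightarrow> 'a::euclidean_space"
  shows "(\<Sum>p\<le>N+1. \<Sum>q\<le>N+1. v p * inner (P p) (P q) * v q) = (norm (lin N P v))\<^sup>2"
proof -
  have "(\<Sum>p\<le>N+1. \<Sum>q\<le>N+1. v p * inner (P p) (P q) * v q) = (\<Sum>p\<le>N+1. \<Sum>q\<le>N+1. inner (P p) (P q) * (v q * v p))"
    by (rule sum.cong[OF refl], rule sum.cong[OF refl]) simp
  also have "\<dots> = (norm (lin N P v))\<^sup>2" unfolding T_bil by (simp add: power2_norm_eq_inner)
  finally show ?thesis .
qed

lemma trace_AR: "trace_prod N G (AR N) = G (N+1) (N+1)"
proof -
  have "trace_prod N G (AR N) = (\<Sum>p\<le>N+1. if p = N + 1 then G p (N+1) else 0)"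
    unfolding trace_prod_def AR_def by (rule sum.cong[OF refl]) (simp add: if_distrib cong: if_cong)
  thus ?thesis by simp
qed

lemma trace_cong:
  assumes "\<And>p q. p \<le> N + 1 \<Longrightarrow> q \<le> N + 1 \<Longrightarrow> G p q = G' p q"
  shows "trace_prod N G A = trace_prod N G' A"
  unfolding trace_prod_def using assms by (intro sum.cong refl) auto

theorem theorem5:
  fixes \<mu> :: real and L :: ereal and R :: real and N :: nat
    and h :: "nat \<Rightarrow> nat \<Rightarrow> real" and b :: "nat \<Rightarrow> real" and C :: "nat \<Rightarrow> nat \<Rightarrow> real"
  assumes "0 \<le> \<mu>" and "ereal \<mu> < L"
    and "N \<ge> 1" and "R \<ge> 0"
    and "\<forall>i\<in>{1..N}. \<forall>k<N. i \<le> k \<longrightarrow> h i k = 0"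
    and "sym_mat N C"
    and "DIM('a::euclidean_space) \<ge> N + 2"
  shows "w_d TYPE('a) \<mu> L R h N b C = w_sdp \<mu> L R h N b C"
proof -
  have mu0: "0 \<le> \<mu>" and muL: "ereal \<mu> < L" and R0: "R \<ge> 0" and hdim: "N + 2 \<le> DIM('a)"
    using assms by auto
  define Dset where "Dset = { ereal ((\<Sum>i\<le>N. b i * fv i) +
        (\<Sum>p\<le>N+1. \<Sum>q\<le>N+1. C p q * inner (Pcol N x g q) (Pcol N x g p)))
     | (x :: nat \<Rightarrow> 'a) g fv.
       interpolable \<mu> L ({(x i, g i, fv i) | i. i \<le> N} \<union> {(0, 0, 0)}) \<and>
       (\<forall>i\<in>{1..N}. x i = x 0 - (\<Sum>k<i. h i k *\<^sub>R g k)) \<and>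
       norm (x 0 - 0) \<le> R }"
  define Sset where "Sset = { ereal ((\<Sum>i\<le>N. b i * fv i) + trace_prod N C G)
     | G fv.
       (\<forall>i\<in>Iset N. \<forall>j\<in>Iset N.
          fopt fv j - fopt fv i + trace_prod N G (Amat \<mu> L h N i j) \<le> 0) \<and>
       trace_prod N G (AR N) \<le> R\<^sup>2 \<and>
       psd_mat N G }"
  have wd: "w_d TYPE('a) \<mu> L R h N b C = Sup Dset" unfolding w_d_def Dset_def ..
  have ws: "w_sdp \<mu> L R h N b C = Sup Sset" unfolding w_sdp_def Sset_def ..
  have iset: "i \<in> Iset N \<longleftrightarrow> i = None \<or> (\<exists>k\<le>N. i = Some k)" for i
    unfolding Iset_def by auto
  have D1: "z \<in> Sset" if zin: "z \<in> Dset" for z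
  proof -
    obtain x :: "nat \<Rightarrow> 'a" and g fv where zd: "z = ereal ((\<Sum>i\<le>N. b i * fv i) +
        (\<Sum>p\<le>N+1. \<Sum>q\<le>N+1. C p q * inner (Pcol N x g q) (Pcol N x g p)))"
      and int: "interpolable \<mu> L ({(x i, g i, fv i) | i. i \<le> N} \<union> {(0, 0, 0)})"
      and it: "\<forall>i\<in>{1..N}. x i = x 0 - (\<Sum>k<i. h i k *\<^sub>R g k)"
      and nr: "norm (x 0 - 0) \<le> R"
      using zin unfolding Dset_def by blast
    define S where "S = {(x i, g i, fv i) | i. i \<le> N} \<union> {(0, 0, 0)}"
    define P where "P = Pcol N x g"
    define G where "G p q = inner (P p) (P q)" for p q
    have Pg: "P p = g p" if "p \<le> N" for p using that unfolding P_def Pcol_def by simp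
    have Px: "P (N+1) = x 0" unfolding P_def Pcol_def by simp
    have lh: "lin N P (hvec h N (Some i)) = x i" if i: "i \<le> N" for i
    proof -
      have "lin N P (hvec h N (Some i)) = x 0 - (\<Sum>k<i. h i k *\<^sub>R g k)"
        unfolding lin_hvec[OF i] Px using i Pg by (auto intro!: sum.cong)
      also have "\<dots> = x i" using it i by (cases "i = 0") auto
      finally show ?thesis .
    qed
    have lu: "lin N P (uvec (Some i)) = g i" if i: "i \<le> N" for i
      using lin_uvec[of i N P] i Pg by simp
    have trS: "(lin N P (hvec h N i), lin N P (uvec i), fopt fv i) \<in> S" if "i \<in> Iset N" for i
    proof (cases i)
      case None thus ?thesis by (simp add: S_def lin_None fopt_def)
    next
      case (Some k)
      hence k: "k \<le> N" using that by (auto simp: Iset_def)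
      thus ?thesis using Some lh lu by (auto simp: S_def fopt_def)
    qed
    obtain f where fF: "f \<in> FmuL \<mu> L" and fS: "\<forall>(x', g', v)\<in>S. f x' = ereal v \<and> g' \<in> subdiff f x'"
      using int unfolding interpolable_def S_def by blast
    have cons: "fopt fv j - fopt fv i + trace_prod N G (Amat \<mu> L h N i j) \<le> 0"
      if "i \<in> Iset N" "j \<in> Iset N" for i j
    proof -
      have a: "f (lin N P (hvec h N i)) = ereal (fopt fv i) \<and> lin N P (uvec i) \<in> subdiff f (lin N P (hvec h N i))"
        using fS trS[OF that(1)] by blast
      have c: "f (lin N P (hvec h N j)) = ereal (fopt fv j) \<and> lin N P (uvec j) \<in> subdiff f (lin N P (hvec h N j))"
        using fS trS[OF that(2)] by blast
      have "qc \<mu> L (lin N P (hvec h N i), lin N P (uvec i), fopt fv i) (lin N P (hvec h N j), lin N P (uvec j), fopt fv j)"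
        using nec[OF fF mu0 muL] a c by blast
      thus ?thesis unfolding trace_qc G_def .
    qed
    have psd: "psd_mat N G"
      unfolding psd_mat_def sym_mat_def G_def quadform by (simp add: inner_commute)
    have ar: "trace_prod N G (AR N) \<le> R\<^sup>2"
      unfolding trace_AR G_def Px using nr R0 by (simp add: power2_norm_eq_inner[symmetric] power_mono)
    have obj: "trace_prod N C G = (\<Sum>p\<le>N+1. \<Sum>q\<le>N+1. C p q * inner (Pcol N x g q) (Pcol N x g p))"
      unfolding trace_prod_def G_def P_def ..
    have "z = ereal ((\<Sum>i\<le>N. b i * fv i) + trace_prod N C G)" unfolding zd obj ..
    hence "\<exists>G' fv'. z = ereal ((\<Sum>i\<le>N. b i * fv' i) + trace_prod N C G') \<and>
       (\<forall>i\<in>Iset N. \<forall>j\<in>Iset N. fopt fv' j - fopt fv' i + trace_prod N G' (Amat \<mu> L h N i j) \<le> 0) \<and>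
       trace_prod N G' (AR N) \<le> R\<^sup>2 \<and> psd_mat N G'"
      using cons ar psd by (intro exI[of _ G] exI[of _ fv]) simp
    thus ?thesis unfolding Sset_def by (simp only: mem_Collect_eq)
  qed
  have D2: "z \<in> Dset" if zin: "z \<in> Sset" for z
  proof -
    obtain G fv where zs: "z = ereal ((\<Sum>i\<le>N. b i * fv i) + trace_prod N C G)"
      and cons: "\<forall>i\<in>Iset N. \<forall>j\<in>Iset N. fopt fv j - fopt fv i + trace_prod N G (Amat \<mu> L h N i j) \<le> 0"
      and ar: "trace_prod N G (AR N) \<le> R\<^sup>2" and psd: "psd_mat N G"
      using zin unfolding Sset_def by blast
    have lt: "{..<N+2} = {..N+1}" by auto
    have s1: "\<forall>p<N+2. \<forall>q<N+2. G p q = G q p" using psd unfolding psd_mat_def sym_mat_def by auto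
    have s2: "\<forall>v. 0 \<le> (\<Sum>p<N+2. \<Sum>q<N+2. v p * G p q * v q)" using psd unfolding psd_mat_def lt by blast
    obtain P :: "nat \<Rightarrow> 'a" where P: "\<forall>p<N+2. \<forall>q<N+2. G p q = inner (P p) (P q)"
      using factor[OF s1 s2 hdim] by blast
    define g where "g = P"
    define x where "x i = P (N+1) - (\<Sum>k<i. h i k *\<^sub>R P k)" for i
    have x0: "x 0 = P (N+1)" unfolding x_def by simp
    have Pc: "Pcol N x g p = P p" if "p \<le> N + 1" for p
    proof (cases "p \<le> N")
      case True thus ?thesis unfolding Pcol_def g_def by simp
    next
      case False hence "p = N + 1" using that by simp
      thus ?thesis unfolding Pcol_def x0 by simp
    qed
    have tc: "trace_prod N G A = trace_prod N (\<lambda>p q. inner (P p) (P q)) A" for A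
      by (rule trace_cong) (use P in auto)
    have obj: "(\<Sum>p\<le>N+1. \<Sum>q\<le>N+1. C p q * inner (Pcol N x g q) (Pcol N x g p)) = trace_prod N C G"
      unfolding trace_prod_def using P Pc by (intro sum.cong refl) auto
    have it: "\<forall>i\<in>{1..N}. x i = x 0 - (\<Sum>k<i. h i k *\<^sub>R g k)" unfolding x0 g_def x_def by simp
    have nr: "norm (x 0 - 0) \<le> R"
    proof -
      have "G (N+1) (N+1) = (norm (P (N+1)))\<^sup>2" using P by (simp add: power2_norm_eq_inner)
      hence "(norm (x 0))\<^sup>2 \<le> R\<^sup>2" using ar unfolding trace_AR x0 by simp
      hence "norm (x 0) \<le> R" using R0 by (rule power2_le_imp_le)
      thus ?thesis by simp
    qed
    define S where "S = {(x i, g i, fv i) | i. i \<le> N} \<union> {(0 :: 'a, 0 :: 'a, 0 :: real)}"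
    define trip where "trip i = (lin N P (hvec h N i), lin N P (uvec i), fopt fv i)" for i
    have trS: "\<exists>i\<in>Iset N. t = trip i" if "t \<in> S" for t
    proof -
      from that consider (a) k where "k \<le> N" "t = (x k, g k, fv k)" | (b) "t = (0, 0, 0)"
        unfolding S_def by blast
      thus ?thesis
      proof cases
        case (a k)
        have "trip (Some k) = (x k, g k, fv k)" unfolding trip_def lin_hvec[OF a(1)] x_def g_def
          using lin_uvec[of k N P] a(1) by (simp add: fopt_def)
        moreover have "Some k \<in> Iset N" using a(1) by (simp add: Iset_def)
        ultimately show ?thesis using a(2) by (intro bexI[where x="Some k"]) simp_all
      next
        case b
        have "trip None = (0, 0, 0)" unfolding trip_def lin_None by (simp add: fopt_def)
        moreover have "None \<in> Iset N" by (simp add: Iset_def)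
        ultimately show ?thesis using b by (intro bexI[where x="None"]) simp_all
      qed
    qed
    have finS: "finite S"
    proof -
      have "S = (\<lambda>i. (x i, g i, fv i)) ` {..N} \<union> {(0, 0, 0)}" unfolding S_def by auto
      thus ?thesis by simp
    qed
    have "(0, 0, 0) \<in> S" unfolding S_def by blast
    hence neS: "S \<noteq> {}" by blast
    have Q: "qc \<mu> L ti tj" if tiS: "ti \<in> S" and tjS: "tj \<in> S" for ti tj
    proof -
      obtain i j where ij: "i \<in> Iset N" "j \<in> Iset N" "ti = trip i" "tj = trip j"
        using trS[OF tiS] trS[OF tjS] by blast
      have "fopt fv j - fopt fv i + trace_prod N (\<lambda>p q. inner (P p) (P q)) (Amat \<mu> L h N i j) \<le> 0"
        using cons ij unfolding tc by blast
      thus ?thesis unfolding ij trip_def trace_qc .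
    qed
    have int: "interpolable \<mu> L S" by (rule suff[OF finS neS mu0 muL Q])
    have "z = ereal ((\<Sum>i\<le>N. b i * fv i) +
        (\<Sum>p\<le>N+1. \<Sum>q\<le>N+1. C p q * inner (Pcol N x g q) (Pcol N x g p)))" unfolding zs obj ..
    hence "\<exists>(x' :: nat \<Rightarrow> 'a) g' fv'. z = ereal ((\<Sum>i\<le>N. b i * fv' i) +
        (\<Sum>p\<le>N+1. \<Sum>q\<le>N+1. C p q * inner (Pcol N x' g' q) (Pcol N x' g' p))) \<and>
       interpolable \<mu> L ({(x' i, g' i, fv' i) | i. i \<le> N} \<union> {(0, 0, 0)}) \<and>
       (\<forall>i\<in>{1..N}. x' i = x' 0 - (\<Sum>k<i. h i k *\<^sub>R g' k)) \<and>
       norm (x' 0 - 0) \<le> R"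
      using int it nr unfolding S_def by (intro exI[of _ x] exI[of _ g] exI[of _ fv]) simp
    thus ?thesis unfolding Dset_def by (simp only: mem_Collect_eq)
  qed
  have "Dset = Sset" using D1 D2 by blast
  thus ?thesis unfolding wd ws by simp
qed

end
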